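(* Let $G$ be an antipodal partial cube of rank $3$ and let $E_e$ be a $\Theta$-class of $G$. Then there is a vertex of degree $3$ incident to an edge of $E_e$.
   Context: Hypercube $Q_n$: vertex set $\{+,-\}^n$, adjacency = differing in one coordinate. A partial cube is an isometric subgraph $G$ of $Q_n$ with $n$ minimal; its edges split into $\Theta$-classes $E_f$ (edges whose endpoints differ in coordinate $f$). $G$ is antipodal if for each vertex $v$ of $G$ the vertex with all coordinates of $v$ flipped is also in $G$. The contraction $\pi_f(G)$ contracts all edges of $E_f$; the rank of $G$ is the largest $r$ such that $Q_r$ can be obtained from $G$ by a sequence of contractions. *)

theory Defs
  imports Main
begin

text \<open>Vertices of the hypercube Q_n are encoded as subsets of {0..<n}
 (the set of coordinates carrying sign +). A subgraph of a hypercube is given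
 by its vertex set V; edges are the hypercube edges between vertices of V
 (isometric subgraphs are induced).\<close>

definition hdist :: "nat set \<Rightarrow> nat set \<Rightarrow> nat" where
  "hdist u v = card ((u - v) \<union> (v - u))"

definition hadj :: "nat set \<Rightarrow> nat set \<Rightarrow> bool" where
  "hadj u v \<longleftrightarrow> hdist u v = 1"

definition flip :: "nat \<Rightarrow> nat set \<Rightarrow> nat set" where
  "flip f v = (if f \<in> v then v - {f} else insert f v)"

definition walk :: "nat set set \<Rightarrow> nat set list \<Rightarrow> bool" where
  "walk V xs \<longleftrightarrow> xs \<noteq> [] \<and> set xs \<subseteq> V \<and>
     (\<forall>i. Suc i < length xs \<longrightarrow> hadj (xs ! i) (xs ! Suc i))"

definition reachable :: "nat set set \<Rightarrow> nat set \<Rightarrow> nat set \<Rightarrow> bool" where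
  "reachable V u v \<longleftrightarrow> (\<exists>xs. walk V xs \<and> hd xs = u \<and> last xs = v)"

definition gdist :: "nat set set \<Rightarrow> nat set \<Rightarrow> nat set \<Rightarrow> nat" where
  "gdist V u v = (LEAST k. \<exists>xs. walk V xs \<and> hd xs = u \<and> last xs = v \<and> length xs = Suc k)"

definition isometric_sub :: "nat \<Rightarrow> nat set set \<Rightarrow> bool" where
  "isometric_sub n V \<longleftrightarrow> V \<noteq> {} \<and> V \<subseteq> Pow {0..<n} \<and>
     (\<forall>u\<in>V. \<forall>v\<in>V. reachable V u v \<and> gdist V u v = hdist u v)"

text \<open>Partial cube: isometric in Q_n with n minimal, i.e. every coordinate
 is non-constant on V (equivalently every Theta-class E_f, f < n, is non-empty).\<close>
definition partial_cube :: "nat \<Rightarrow> nat set set \<Rightarrow> bool" where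
  "partial_cube n V \<longleftrightarrow> isometric_sub n V \<and>
     (\<forall>f<n. \<exists>u\<in>V. \<exists>v\<in>V. f \<in> u \<and> f \<notin> v)"

definition antipodal :: "nat \<Rightarrow> nat set set \<Rightarrow> bool" where
  "antipodal n V \<longleftrightarrow> (\<forall>v\<in>V. {0..<n} - v \<in> V)"

text \<open>Contraction of the Theta-class E_f: identifies the endpoints of every
 edge of E_f, i.e. forgets coordinate f.\<close>
definition contract :: "nat \<Rightarrow> nat set set \<Rightarrow> nat set set" where
  "contract f V = (\<lambda>v. v - {f}) ` V"

definition graph_iso :: "nat set set \<Rightarrow> nat set set \<Rightarrow> bool" where
  "graph_iso V W \<longleftrightarrow> (\<exists>\<phi>. bij_betw \<phi> V W \<and>
     (\<forall>u\<in>V. \<forall>v\<in>V. hadj u v \<longleftrightarrow> hadj (\<phi> u) (\<phi> v)))"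

definition cube :: "nat \<Rightarrow> nat set set" where
  "cube r = Pow {0..<r}"

definition pc_rank :: "nat set set \<Rightarrow> nat" where
  "pc_rank V = (GREATEST r. \<exists>fs. graph_iso (fold contract fs V) (cube r))"

definition degree :: "nat set set \<Rightarrow> nat set \<Rightarrow> nat" where
  "degree V v = card {u\<in>V. hadj u v}"

end

theory Submission
  imports Defs
begin

definition ax5 :: "(bool \<Rightarrow> bool \<Rightarrow> bool \<Rightarrow> bool \<Rightarrow> bool \<Rightarrow> bool) \<Rightarrow> bool" where
 "ax5 w \<longleftrightarrow> (\<forall>a b c d e. w a b c d e \<longrightarrow> w (\<not>a) (\<not>b) (\<not>c) (\<not>d) (\<not>e))
  \<and> (\<forall>a b c d e. w a b c d e \<longrightarrow> w (\<not>a) (\<not>b) c d e \<longrightarrow> w (\<not>a) b c d e \<or> w a (\<not>b) c d e)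
  \<and> (\<forall>a b c d e. w a b c d e \<longrightarrow> w (\<not>a) b (\<not>c) d e \<longrightarrow> w (\<not>a) b c d e \<or> w a b (\<not>c) d e)
  \<and> (\<forall>a b c d e. w a b c d e \<longrightarrow> w (\<not>a) b c (\<not>d) e \<longrightarrow> w (\<not>a) b c d e \<or> w a b c (\<not>d) e)
  \<and> (\<forall>a b c d e. w a b c d e \<longrightarrow> w (\<not>a) b c d (\<not>e) \<longrightarrow> w (\<not>a) b c d e \<or> w a b c d (\<not>e))
  \<and> (\<forall>a b c d e. w a b c d e \<longrightarrow> w a (\<not>b) (\<not>c) d e \<longrightarrow> w a (\<not>b) c d e \<or> w a b (\<not>c) d e)
  \<and> (\<forall>a b c d e. w a b c d e \<longrightarrow> w a (\<not>b) c (\<not>d) e \<longrightarrow> w a (\<not>b) c d e \<or> w a b c (\<not>d) e)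
  \<and> (\<forall>a b c d e. w a b c d e \<longrightarrow> w a (\<not>b) c d (\<not>e) \<longrightarrow> w a (\<not>b) c d e \<or> w a b c d (\<not>e))
  \<and> (\<forall>a b c d e. w a b c d e \<longrightarrow> w a b (\<not>c) (\<not>d) e \<longrightarrow> w a b (\<not>c) d e \<or> w a b c (\<not>d) e)
  \<and> (\<forall>a b c d e. w a b c d e \<longrightarrow> w a b (\<not>c) d (\<not>e) \<longrightarrow> w a b (\<not>c) d e \<or> w a b c d (\<not>e))
  \<and> (\<forall>a b c d e. w a b c d e \<longrightarrow> w a b c (\<not>d) (\<not>e) \<longrightarrow> w a b c (\<not>d) e \<or> w a b c d (\<not>e))
  \<and> (\<exists>b c d e. \<forall>a. \<not> w a b c d e)
  \<and> (\<exists>a c d e. \<forall>b. \<not> w a b c d e)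
  \<and> (\<exists>a b d e. \<forall>c. \<not> w a b c d e)
  \<and> (\<exists>a b c e. \<forall>d. \<not> w a b c d e)
  \<and> (\<exists>a b c d. \<forall>e. \<not> w a b c d e)"

definition ax4 :: "(bool \<Rightarrow> bool \<Rightarrow> bool \<Rightarrow> bool \<Rightarrow> bool) \<Rightarrow> bool" where
 "ax4 w \<longleftrightarrow> (\<forall>a b c d. w a b c d \<longrightarrow> w (\<not>a) (\<not>b) (\<not>c) (\<not>d))
  \<and> (\<forall>a b c d. w a b c d \<longrightarrow> w (\<not>a) (\<not>b) c d \<longrightarrow> w (\<not>a) b c d \<or> w a (\<not>b) c d)
  \<and> (\<forall>a b c d. w a b c d \<longrightarrow> w (\<not>a) b (\<not>c) d \<longrightarrow> w (\<not>a) b c d \<or> w a b (\<not>c) d)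
  \<and> (\<forall>a b c d. w a b c d \<longrightarrow> w (\<not>a) b c (\<not>d) \<longrightarrow> w (\<not>a) b c d \<or> w a b c (\<not>d))
  \<and> (\<forall>a b c d. w a b c d \<longrightarrow> w a (\<not>b) (\<not>c) d \<longrightarrow> w a (\<not>b) c d \<or> w a b (\<not>c) d)
  \<and> (\<forall>a b c d. w a b c d \<longrightarrow> w a (\<not>b) c (\<not>d) \<longrightarrow> w a (\<not>b) c d \<or> w a b c (\<not>d))
  \<and> (\<forall>a b c d. w a b c d \<longrightarrow> w a b (\<not>c) (\<not>d) \<longrightarrow> w a b (\<not>c) d \<or> w a b c (\<not>d))
  \<and> (\<exists>a b c d. \<not> w a b c d)"

lemma claimC:
  assumes "ax4 w" "\<forall>b c d. \<exists>a. w a b c d" "\<exists>b c d. w True b c d" "\<exists>b c d. w False b c d"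
  shows "(\<forall>a b c. \<exists>d. w a b c d) \<or> (\<forall>a b d. \<exists>c. w a b c d) \<or> (\<forall>a c d. \<exists>b. w a b c d)"
  using assms unfolding ax4_def
  apply (simp only: all_bool_eq ex_bool_eq)
  apply smt
  done

lemma claimE:
  assumes "ax4 w" "\<forall>a b c. \<exists>d. w a b c d"
    "w s1 s2 s3 True \<and> w s1 (\<not>s2) s3 True \<and> w s1 s2 s3 False \<and> w s1 (\<not>s2) s3 False"
  shows "(\<forall>a b d. \<exists>c. w a b c d) \<and> (\<exists>t1 t2. \<forall>c. w s1 t1 c t2 \<and> w s1 (\<not>t1) c t2 \<longrightarrow> c = s3)"
  using assms unfolding ax4_def
  apply (simp only: all_bool_eq ex_bool_eq)
  apply (cases s1; cases s2; cases s3)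
  apply (simp_all only: simp_thms not_True_eq_False not_False_eq_True)
  apply smt+
  done

lemma claimU1:
  assumes "ax4 w" "\<forall>a b c. \<exists>d. w a b c d"
    "w s1 s2 s3 True \<and> w s1 s2 s3 False"
    "\<not> (w s1 s2 s3 True \<and> w s1 (\<not>s2) s3 True \<and> w s1 s2 s3 False \<and> w s1 (\<not>s2) s3 False)"
  shows "(\<forall>a c d. \<exists>b. w a b c d) \<and> (\<exists>c. \<forall>b. w s1 b s3 c \<longrightarrow> b = s2)"
  using assms unfolding ax4_def
  apply (simp only: all_bool_eq ex_bool_eq)
  apply (cases s1; cases s2; cases s3)
  apply (simp_all only: simp_thms not_True_eq_False not_False_eq_True)
  apply smt+
  done

lemma claimU2:
  assumes "ax5 w" 
  and fullA: "\<forall>p1 p2 p3. \<exists>p4 p5. w p1 p2 p3 p4 p5"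
  and fullK: "\<forall>p1 p3 p4. \<exists>p2 p5. w p1 p2 p3 p4 p5"
  and uk: "\<forall>p4 p5 p4' p5'. w s1 s2 s3 p4 p5 \<and> w s1 (\<not>s2) s3 p4 p5 \<and> w s1 s2 s3 p4' p5' \<and> w s1 (\<not>s2) s3 p4' p5' \<longrightarrow> p4 = p4' \<and> p5 = p5'"
  and ksub: "\<forall>p2 p5. w s1 p2 s3 c p5 \<longrightarrow> p2 = s2"
  and spl: "w s1 s2 s3 c True \<and> w s1 s2 (\<not>s3) c True \<and> w s1 s2 s3 c False \<and> w s1 s2 (\<not>s3) c False"
  shows "\<exists>c'. (\<forall>p1 p3 p5. \<exists>p2 p4. w p1 p2 p3 p4 p5) \<and> (\<forall>p2 p4. w s1 p2 s3 p4 c' \<longrightarrow> p2 = s2)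
      \<and> (\<forall>p2 p4. w s1 p2 s3 p4 c' \<and> w s1 p2 (\<not>s3) p4 c' \<longrightarrow> p4 = c)"
  using assms unfolding ax5_def
  apply (simp only: all_bool_eq ex_bool_eq)
  apply (cases s1; cases s2; cases s3; cases c)
  apply (simp_all only: simp_thms not_True_eq_False not_False_eq_True)
  apply smt+
  done

lemma flip_mem: "(i \<in> flip f v) = (if i = f then i \<notin> v else i \<in> v)"
  by (auto simp: flip_def)

lemma flip_flip[simp]: "flip f (flip f v) = v"
  by (auto simp: flip_def)

lemma flip_neq: "flip f v \<noteq> v"
  by (auto simp: flip_def)

lemma inj_flip: "inj (flip f)"
  by (metis flip_flip injI)

lemma hdist_sym: "hdist u v = hdist v u"
  by (simp add: hdist_def Un_commute)

lemma hdist_self[simp]: "hdist u u = 0"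
  by (simp add: hdist_def)

lemma hdist_triangle:
  assumes "finite a" "finite b" "finite c"
  shows "hdist a c \<le> hdist a b + hdist b c"
proof -
  have "(a - c) \<union> (c - a) \<subseteq> ((a - b) \<union> (b - a)) \<union> ((b - c) \<union> (c - b))" by auto
  then have "hdist a c \<le> card (((a - b) \<union> (b - a)) \<union> ((b - c) \<union> (c - b)))"
    unfolding hdist_def by (intro card_mono) (use assms in auto)
  also have "\<dots> \<le> hdist a b + hdist b c" unfolding hdist_def by (rule card_Un_le)
  finally show ?thesis .
qed

lemma hdist_strict:
  assumes "finite a" "finite b" "finite c"
    and "(x \<in> a) = (x \<in> c)" "(x \<in> b) \<noteq> (x \<in> a)"
  shows "hdist a c + 2 \<le> hdist a b + hdist b c"
proof -
  let ?A = "(a - b) \<union> (b - a)" and ?B = "(b - c) \<union> (c - b)" and ?C = "(a - c) \<union> (c - a)"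
  have fin: "finite ?A" "finite ?B" using assms by auto
  have "?C \<union> {x} \<subseteq> ?A \<union> ?B" using assms by auto
  moreover have "x \<notin> ?C" using assms by auto
  ultimately have "card ?C + 1 \<le> card (?A \<union> ?B)"
    using fin by (metis Suc_eq_plus1 card_insert_disjoint card_mono finite_Un finite_subset insert_is_Un sup_commute)
  moreover have "x \<in> ?A \<inter> ?B" using assms by auto
  then have "card (?A \<inter> ?B) \<ge> 1" using fin
    by (metis One_nat_def Suc_leI card_gt_0_iff emptyE finite_Int)
  moreover have "card (?A \<union> ?B) + card (?A \<inter> ?B) = card ?A + card ?B"
    using fin card_Un_Int by metis
  ultimately show ?thesis unfolding hdist_def by linarith
qed

lemma hadj_flip:
  assumes "hadj u w"
  shows "\<exists>t. w = flip t u"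
proof -
  have "card ((u - w) \<union> (w - u)) = 1" using assms by (simp add: hadj_def hdist_def)
  then obtain t where t: "(u - w) \<union> (w - u) = {t}" by (meson card_1_singletonE)
  have key: "((i \<in> u) \<noteq> (i \<in> w)) = (i = t)" for i
  proof -
    have "(i \<in> (u - w) \<union> (w - u)) = (i \<in> {t})" using t by simp
    then show ?thesis by auto
  qed
  have "w = flip t u"
    by (rule set_eqI) (metis flip_mem key)
  then show ?thesis by blast
qed

lemma hadj_flip_self: "hadj u (flip t u)"
proof -
  have "(u - flip t u) \<union> (flip t u - u) = {t}" by (auto simp: flip_def)
  then show ?thesis by (simp add: hadj_def hdist_def)
qed

lemma hadj_sym: "hadj u v = hadj v u"
  by (simp add: hadj_def hdist_sym)

definition fullS :: "nat set set \<Rightarrow> nat set \<Rightarrow> bool" where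
  "fullS V S \<longleftrightarrow> (\<forall>s. \<exists>v\<in>V. \<forall>i\<in>S. (i \<in> v) = s i)"

locale pcl =
  fixes n :: nat and V :: "nat set set"
  assumes sub: "V \<subseteq> Pow {0..<n}"
  and geo: "\<And>u w. u \<in> V \<Longrightarrow> w \<in> V \<Longrightarrow> \<exists>xs. walk V xs \<and> hd xs = u \<and> last xs = w \<and> length xs = Suc (hdist u w)"
  and anti: "\<And>v. v \<in> V \<Longrightarrow> {0..<n} - v \<in> V"
  and nf4: "\<And>S. card S = 4 \<Longrightarrow> \<not> fullS V S"
begin

lemma finV: "v \<in> V \<Longrightarrow> finite v"
proof -
  assume "v \<in> V"
  then have "v \<subseteq> {0..<n}" using sub by auto
  then show ?thesis using finite_subset by blast
qed

lemma subn: "v \<in> V \<Longrightarrow> i \<in> v \<Longrightarrow> i < n"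
proof -
  assume "v \<in> V" "i \<in> v"
  then have "v \<subseteq> {0..<n}" using sub by auto
  then show ?thesis using \<open>i \<in> v\<close> by auto
qed

lemma walk_mem: "walk V xs \<Longrightarrow> i < length xs \<Longrightarrow> xs ! i \<in> V"
  by (auto simp: walk_def dest!: nth_mem)

lemma walk_dist:
  assumes "walk V xs" "i \<le> j" "j < length xs"
  shows "hdist (xs ! i) (xs ! j) \<le> j - i"
  using assms(2,3)
proof (induction j)
  case 0
  then show ?case by simp
next
  case (Suc j)
  show ?case
  proof (cases "i = Suc j")
    case True
    then show ?thesis by simp
  next
    case False
    then have ij: "i \<le> j" using Suc by simp
    have IH: "hdist (xs ! i) (xs ! j) \<le> j - i" using Suc ij by simp
    have mem: "xs ! i \<in> V" "xs ! j \<in> V" "xs ! Suc j \<in> V"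
      using walk_mem[OF assms(1)] Suc by auto
    have "hadj (xs ! j) (xs ! Suc j)" using assms(1) Suc by (simp add: walk_def)
    then have "hdist (xs ! j) (xs ! Suc j) = 1" by (simp add: hadj_def)
    moreover have "hdist (xs ! i) (xs ! Suc j) \<le> hdist (xs ! i) (xs ! j) + hdist (xs ! j) (xs ! Suc j)"
      using mem by (intro hdist_triangle finV)
    ultimately show ?thesis using IH ij by linarith
  qed
qed


lemma geo_mono:
  assumes "walk V xs" "hd xs = u" "last xs = w" "length xs = Suc (hdist u w)"
    "i < length xs" "(c \<in> u) = (c \<in> w)"
  shows "(c \<in> xs ! i) = (c \<in> u)"
proof (rule ccontr)
  assume neq: "(c \<in> xs ! i) \<noteq> (c \<in> u)"
  have ne: "xs \<noteq> []" using assms(1) by (simp add: walk_def)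
  have u: "u = xs ! 0" using assms(2) ne by (simp add: hd_conv_nth)
  have w: "w = xs ! (length xs - 1)" using assms(3) ne by (simp add: last_conv_nth)
  have mem: "u \<in> V" "w \<in> V" "xs ! i \<in> V"
    using u w assms(5) walk_mem[OF assms(1)] ne by auto
  have d1: "hdist u (xs ! i) \<le> i" using walk_dist[OF assms(1), of 0 i] u assms(5) by simp
  have d2: "hdist (xs ! i) w \<le> length xs - 1 - i" using walk_dist[OF assms(1), of i "length xs - 1"] w assms(5) by simp
  have "hdist u w + 2 \<le> hdist u (xs ! i) + hdist (xs ! i) w"
    using mem neq assms(6) by (intro hdist_strict finV) auto
  then show False using d1 d2 assms(4,5) by linarith
qed

lemma first_change:
  assumes "u \<in> V" "w \<in> V" "t0 \<in> S" "(t0 \<in> u) \<noteq> (t0 \<in> w)"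
  shows "\<exists>v\<in>V. \<exists>t\<in>S. (\<forall>i\<in>S. (i \<in> v) = (i \<in> u)) \<and> flip t v \<in> V \<and> (t \<in> u) \<noteq> (t \<in> w)"
proof -
  obtain xs where xs: "walk V xs" "hd xs = u" "last xs = w" "length xs = Suc (hdist u w)"
    using geo assms(1,2) by blast
  have ne: "xs \<noteq> []" using xs(1) by (simp add: walk_def)
  define P where "P i \<longleftrightarrow> (\<exists>c\<in>S. (c \<in> xs ! i) \<noteq> (c \<in> u))" for i
  have lastw: "xs ! (length xs - 1) = w" using xs(3) ne by (simp add: last_conv_nth)
  have Pl: "P (length xs - 1)" unfolding P_def lastw using assms(3,4) by blast
  have hd0: "xs ! 0 = u" using xs(2) ne by (simp add: hd_conv_nth)
  have P0: "\<not> P 0" unfolding P_def hd0 by blast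
  define i where "i = (LEAST i. P i)"
  have Pi: "P i" unfolding i_def using Pl by (rule LeastI)
  have ile: "i \<le> length xs - 1" unfolding i_def using Pl by (rule Least_le)
  have ipos: "i > 0" using Pi P0 by (cases i) auto
  have nP: "\<not> P (i - 1)"
  proof
    assume "P (i - 1)"
    then have "i \<le> i - 1" unfolding i_def by (rule Least_le)
    then show False using ipos by simp
  qed
  have ilt: "i < length xs" using ile ne by (cases xs) auto
  have adj0: "\<forall>k. Suc k < length xs \<longrightarrow> hadj (xs ! k) (xs ! Suc k)" using xs(1) by (simp add: walk_def)
  have "Suc (i - 1) = i" using ipos by simp
  then have adj: "hadj (xs ! (i - 1)) (xs ! i)" using adj0 ilt by metis
  obtain t where t: "xs ! i = flip t (xs ! (i - 1))" using hadj_flip[OF adj] by blast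
  define v where "v = xs ! (i - 1)"
  have vV: "v \<in> V" unfolding v_def using walk_mem[OF xs(1)] ilt by simp
  have agree: "\<forall>c\<in>S. (c \<in> v) = (c \<in> u)" using nP unfolding P_def v_def by blast
  obtain c where c: "c \<in> S" "(c \<in> xs ! i) \<noteq> (c \<in> u)" using Pi unfolding P_def by blast
  have cv: "(c \<in> v) = (c \<in> u)" using agree c(1) by blast
  have "c = t"
  proof (rule ccontr)
    assume "c \<noteq> t"
    then have "(c \<in> xs ! i) = (c \<in> v)" unfolding t v_def by (simp add: flip_mem)
    then show False using c(2) cv by simp
  qed
  then have tS: "t \<in> S" using c by simp
  have ftv: "flip t v \<in> V" using t walk_mem[OF xs(1) ilt] unfolding v_def by simp
  have "(t \<in> u) \<noteq> (t \<in> w)"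
  proof
    assume "(t \<in> u) = (t \<in> w)"
    then have "(t \<in> xs ! i) = (t \<in> u)" using geo_mono[OF xs ilt] by simp
    then show False using c \<open>c = t\<close> by simp
  qed
  then show ?thesis using vV tS agree ftv by blast
qed

end

definition PW :: "nat set set \<Rightarrow> nat list \<Rightarrow> bool list set" where
  "PW V cs = {map (\<lambda>c. c \<in> v) cs | v. v \<in> V}"

definition w5 :: "nat set set \<Rightarrow> nat \<Rightarrow> nat \<Rightarrow> nat \<Rightarrow> nat \<Rightarrow> nat \<Rightarrow> bool \<Rightarrow> bool \<Rightarrow> bool \<Rightarrow> bool \<Rightarrow> bool \<Rightarrow> bool" where
  "w5 V c1 c2 c3 c4 c5 a b c d e \<longleftrightarrow> [a,b,c,d,e] \<in> PW V [c1,c2,c3,c4,c5]"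

definition w4 :: "nat set set \<Rightarrow> nat \<Rightarrow> nat \<Rightarrow> nat \<Rightarrow> nat \<Rightarrow> bool \<Rightarrow> bool \<Rightarrow> bool \<Rightarrow> bool \<Rightarrow> bool" where
  "w4 V c1 c2 c3 c4 a b c d \<longleftrightarrow> [a,b,c,d] \<in> PW V [c1,c2,c3,c4]"

lemma w5_iff: "w5 V c1 c2 c3 c4 c5 a b c d e \<longleftrightarrow> (\<exists>v\<in>V. (c1 \<in> v) = a \<and> (c2 \<in> v) = b \<and> (c3 \<in> v) = c \<and> (c4 \<in> v) = d \<and> (c5 \<in> v) = e)"
  unfolding w5_def PW_def by auto

lemma w4_iff: "w4 V c1 c2 c3 c4 a b c d \<longleftrightarrow> (\<exists>v\<in>V. (c1 \<in> v) = a \<and> (c2 \<in> v) = b \<and> (c3 \<in> v) = c \<and> (c4 \<in> v) = d)"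
  unfolding w4_def PW_def by auto

lemma w4_I: "v \<in> V \<Longrightarrow> w4 V c1 c2 c3 c4 (c1 \<in> v) (c2 \<in> v) (c3 \<in> v) (c4 \<in> v)"
  unfolding w4_iff by blast

lemma w5_I: "v \<in> V \<Longrightarrow> w5 V c1 c2 c3 c4 c5 (c1 \<in> v) (c2 \<in> v) (c3 \<in> v) (c4 \<in> v) (c5 \<in> v)"
  unfolding w5_iff by blast

context pcl begin

lemma pw_ant:
  assumes "set cs \<subseteq> {0..<n}" "P \<in> PW V cs"
  shows "map Not P \<in> PW V cs"
proof -
  obtain v where v: "v \<in> V" "P = map (\<lambda>c. c \<in> v) cs" using assms(2) unfolding PW_def by blast
  have "map (\<lambda>c. c \<in> {0..<n} - v) cs = map Not P"
    using assms(1) unfolding v(2) by (induction cs) auto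
  then have "\<exists>v'. map Not P = map (\<lambda>c. c \<in> v') cs \<and> v' \<in> V" using anti[OF v(1)] by metis
  then show ?thesis unfolding PW_def by simp
qed

lemma pw_sq:
  assumes "distinct cs" "i < length cs" "j < length cs" "i \<noteq> j"
    "P \<in> PW V cs" "P[i := \<not> P ! i, j := \<not> P ! j] \<in> PW V cs"
  shows "P[i := \<not> P ! i] \<in> PW V cs \<or> P[j := \<not> P ! j] \<in> PW V cs"
proof -
  obtain u where u: "u \<in> V" "P = map (\<lambda>c. c \<in> u) cs" using assms(5) unfolding PW_def by blast
  obtain w where w: "w \<in> V" "P[i := \<not> P ! i, j := \<not> P ! j] = map (\<lambda>c. c \<in> w) cs"
    using assms(6) unfolding PW_def by blast
  have lenP: "length P = length cs" using u by simp
  have wi: "(cs ! i \<in> w) = (\<not> (cs ! i \<in> u))"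
  proof -
    have "(P[i := \<not> P ! i, j := \<not> P ! j]) ! i = (cs ! i \<in> w)" using w(2) assms(2) by simp
    then show ?thesis using assms(2,4) lenP u(2) by simp
  qed
  obtain v t where vt: "v \<in> V" "t \<in> set cs" "\<forall>c\<in>set cs. (c \<in> v) = (c \<in> u)" "flip t v \<in> V" "(t \<in> u) \<noteq> (t \<in> w)"
    using first_change[OF u(1) w(1), of "cs ! i" "set cs"] wi assms(2) by auto
  obtain l where l: "l < length cs" "t = cs ! l" using vt(2) by (metis in_set_conv_nth)
  have wl: "(cs ! l \<in> w) = (P[i := \<not> P ! i, j := \<not> P ! j]) ! l" using w(2) l(1) by simp
  have ul: "(cs ! l \<in> u) = P ! l" using u(2) l(1) by simp
  have lij: "l = i \<or> l = j"
  proof (rule ccontr)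
    assume "\<not> (l = i \<or> l = j)"
    then have "(P[i := \<not> P ! i, j := \<not> P ! j]) ! l = P ! l" by simp
    then show False using wl ul vt(5) l(2) by simp
  qed
  have pat: "map (\<lambda>c. c \<in> flip t v) cs = P[l := \<not> P ! l]"
  proof (rule nth_equalityI)
    show "length (map (\<lambda>c. c \<in> flip t v) cs) = length (P[l := \<not> P ! l])" using lenP by simp
  next
    fix m assume m: "m < length (map (\<lambda>c. c \<in> flip t v) cs)"
    then have m': "m < length cs" by simp
    have vm: "(cs ! m \<in> v) = P ! m" using vt(3) m' u(2) by (simp)
    show "map (\<lambda>c. c \<in> flip t v) cs ! m = P[l := \<not> P ! l] ! m"
    proof (cases "m = l")
      case True
      then show ?thesis using m' lenP vm l(2) by (simp add: flip_mem)
    next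
      case False
      then have "cs ! m \<noteq> cs ! l" using assms(1) m' l(1) by (simp add: nth_eq_iff_index_eq)
      then show ?thesis using m' lenP vm l(2) False by (simp add: flip_mem)
    qed
  qed
  have "P[l := \<not> P ! l] \<in> PW V cs" unfolding PW_def using pat[symmetric] vt(4) by blast
  then show ?thesis using lij by blast
qed

lemma nf_pat:
  assumes "T \<subseteq> S" "card T = 4"
  shows "\<exists>s. \<forall>v\<in>V. \<exists>c\<in>T. (c \<in> v) \<noteq> s c"
  using nf4[OF assms(2)] by (simp add: fullS_def)

lemma ax5_w5:
  assumes "distinct [c1,c2,c3,c4,c5]" "set [c1,c2,c3,c4,c5] \<subseteq> {0..<n}"
  shows "ax5 (w5 V c1 c2 c3 c4 c5)"
proof -
  let ?cs = "[c1,c2,c3,c4,c5]"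
  have ant0: "w5 V c1 c2 c3 c4 c5 (\<not>a) (\<not>b) (\<not>c) (\<not>d) (\<not>e)" if "w5 V c1 c2 c3 c4 c5 a b c d e" for a b c d e
    using pw_ant[OF assms(2), of "[a,b,c,d,e]"] that unfolding w5_def by simp
  have ant: "\<forall>a b c d e. w5 V c1 c2 c3 c4 c5 a b c d e \<longrightarrow> w5 V c1 c2 c3 c4 c5 (\<not>a) (\<not>b) (\<not>c) (\<not>d) (\<not>e)"
    by (intro allI impI) (rule ant0)
  have sq010: "w5 V c1 c2 c3 c4 c5 a b c d e \<longrightarrow> w5 V c1 c2 c3 c4 c5 (\<not>a) (\<not>b) c d e \<longrightarrow> w5 V c1 c2 c3 c4 c5 (\<not>a) b c d e \<or> w5 V c1 c2 c3 c4 c5 a (\<not>b) c d e" for a b c d e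
    unfolding w5_def using pw_sq[OF assms(1), of 0 1 "[a,b,c,d,e]"] by simp
  have sq01: "\<forall>a b c d e. w5 V c1 c2 c3 c4 c5 a b c d e \<longrightarrow> w5 V c1 c2 c3 c4 c5 (\<not>a) (\<not>b) c d e \<longrightarrow> w5 V c1 c2 c3 c4 c5 (\<not>a) b c d e \<or> w5 V c1 c2 c3 c4 c5 a (\<not>b) c d e" by (intro allI) (rule sq010)
  have sq020: "w5 V c1 c2 c3 c4 c5 a b c d e \<longrightarrow> w5 V c1 c2 c3 c4 c5 (\<not>a) b (\<not>c) d e \<longrightarrow> w5 V c1 c2 c3 c4 c5 (\<not>a) b c d e \<or> w5 V c1 c2 c3 c4 c5 a b (\<not>c) d e" for a b c d e
    unfolding w5_def using pw_sq[OF assms(1), of 0 2 "[a,b,c,d,e]"] by simp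
  have sq02: "\<forall>a b c d e. w5 V c1 c2 c3 c4 c5 a b c d e \<longrightarrow> w5 V c1 c2 c3 c4 c5 (\<not>a) b (\<not>c) d e \<longrightarrow> w5 V c1 c2 c3 c4 c5 (\<not>a) b c d e \<or> w5 V c1 c2 c3 c4 c5 a b (\<not>c) d e" by (intro allI) (rule sq020)
  have sq030: "w5 V c1 c2 c3 c4 c5 a b c d e \<longrightarrow> w5 V c1 c2 c3 c4 c5 (\<not>a) b c (\<not>d) e \<longrightarrow> w5 V c1 c2 c3 c4 c5 (\<not>a) b c d e \<or> w5 V c1 c2 c3 c4 c5 a b c (\<not>d) e" for a b c d e
    unfolding w5_def using pw_sq[OF assms(1), of 0 3 "[a,b,c,d,e]"] by simp
  have sq03: "\<forall>a b c d e. w5 V c1 c2 c3 c4 c5 a b c d e \<longrightarrow> w5 V c1 c2 c3 c4 c5 (\<not>a) b c (\<not>d) e \<longrightarrow> w5 V c1 c2 c3 c4 c5 (\<not>a) b c d e \<or> w5 V c1 c2 c3 c4 c5 a b c (\<not>d) e" by (intro allI) (rule sq030)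
  have sq040: "w5 V c1 c2 c3 c4 c5 a b c d e \<longrightarrow> w5 V c1 c2 c3 c4 c5 (\<not>a) b c d (\<not>e) \<longrightarrow> w5 V c1 c2 c3 c4 c5 (\<not>a) b c d e \<or> w5 V c1 c2 c3 c4 c5 a b c d (\<not>e)" for a b c d e
    unfolding w5_def using pw_sq[OF assms(1), of 0 4 "[a,b,c,d,e]"] by simp
  have sq04: "\<forall>a b c d e. w5 V c1 c2 c3 c4 c5 a b c d e \<longrightarrow> w5 V c1 c2 c3 c4 c5 (\<not>a) b c d (\<not>e) \<longrightarrow> w5 V c1 c2 c3 c4 c5 (\<not>a) b c d e \<or> w5 V c1 c2 c3 c4 c5 a b c d (\<not>e)" by (intro allI) (rule sq040)
  have sq120: "w5 V c1 c2 c3 c4 c5 a b c d e \<longrightarrow> w5 V c1 c2 c3 c4 c5 a (\<not>b) (\<not>c) d e \<longrightarrow> w5 V c1 c2 c3 c4 c5 a (\<not>b) c d e \<or> w5 V c1 c2 c3 c4 c5 a b (\<not>c) d e" for a b c d e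
    unfolding w5_def using pw_sq[OF assms(1), of 1 2 "[a,b,c,d,e]"] by simp
  have sq12: "\<forall>a b c d e. w5 V c1 c2 c3 c4 c5 a b c d e \<longrightarrow> w5 V c1 c2 c3 c4 c5 a (\<not>b) (\<not>c) d e \<longrightarrow> w5 V c1 c2 c3 c4 c5 a (\<not>b) c d e \<or> w5 V c1 c2 c3 c4 c5 a b (\<not>c) d e" by (intro allI) (rule sq120)
  have sq130: "w5 V c1 c2 c3 c4 c5 a b c d e \<longrightarrow> w5 V c1 c2 c3 c4 c5 a (\<not>b) c (\<not>d) e \<longrightarrow> w5 V c1 c2 c3 c4 c5 a (\<not>b) c d e \<or> w5 V c1 c2 c3 c4 c5 a b c (\<not>d) e" for a b c d e
    unfolding w5_def using pw_sq[OF assms(1), of 1 3 "[a,b,c,d,e]"] by simp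
  have sq13: "\<forall>a b c d e. w5 V c1 c2 c3 c4 c5 a b c d e \<longrightarrow> w5 V c1 c2 c3 c4 c5 a (\<not>b) c (\<not>d) e \<longrightarrow> w5 V c1 c2 c3 c4 c5 a (\<not>b) c d e \<or> w5 V c1 c2 c3 c4 c5 a b c (\<not>d) e" by (intro allI) (rule sq130)
  have sq140: "w5 V c1 c2 c3 c4 c5 a b c d e \<longrightarrow> w5 V c1 c2 c3 c4 c5 a (\<not>b) c d (\<not>e) \<longrightarrow> w5 V c1 c2 c3 c4 c5 a (\<not>b) c d e \<or> w5 V c1 c2 c3 c4 c5 a b c d (\<not>e)" for a b c d e
    unfolding w5_def using pw_sq[OF assms(1), of 1 4 "[a,b,c,d,e]"] by simp
  have sq14: "\<forall>a b c d e. w5 V c1 c2 c3 c4 c5 a b c d e \<longrightarrow> w5 V c1 c2 c3 c4 c5 a (\<not>b) c d (\<not>e) \<longrightarrow> w5 V c1 c2 c3 c4 c5 a (\<not>b) c d e \<or> w5 V c1 c2 c3 c4 c5 a b c d (\<not>e)" by (intro allI) (rule sq140)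
  have sq230: "w5 V c1 c2 c3 c4 c5 a b c d e \<longrightarrow> w5 V c1 c2 c3 c4 c5 a b (\<not>c) (\<not>d) e \<longrightarrow> w5 V c1 c2 c3 c4 c5 a b (\<not>c) d e \<or> w5 V c1 c2 c3 c4 c5 a b c (\<not>d) e" for a b c d e
    unfolding w5_def using pw_sq[OF assms(1), of 2 3 "[a,b,c,d,e]"] by simp
  have sq23: "\<forall>a b c d e. w5 V c1 c2 c3 c4 c5 a b c d e \<longrightarrow> w5 V c1 c2 c3 c4 c5 a b (\<not>c) (\<not>d) e \<longrightarrow> w5 V c1 c2 c3 c4 c5 a b (\<not>c) d e \<or> w5 V c1 c2 c3 c4 c5 a b c (\<not>d) e" by (intro allI) (rule sq230)
  have sq240: "w5 V c1 c2 c3 c4 c5 a b c d e \<longrightarrow> w5 V c1 c2 c3 c4 c5 a b (\<not>c) d (\<not>e) \<longrightarrow> w5 V c1 c2 c3 c4 c5 a b (\<not>c) d e \<or> w5 V c1 c2 c3 c4 c5 a b c d (\<not>e)" for a b c d e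
    unfolding w5_def using pw_sq[OF assms(1), of 2 4 "[a,b,c,d,e]"] by simp
  have sq24: "\<forall>a b c d e. w5 V c1 c2 c3 c4 c5 a b c d e \<longrightarrow> w5 V c1 c2 c3 c4 c5 a b (\<not>c) d (\<not>e) \<longrightarrow> w5 V c1 c2 c3 c4 c5 a b (\<not>c) d e \<or> w5 V c1 c2 c3 c4 c5 a b c d (\<not>e)" by (intro allI) (rule sq240)
  have sq340: "w5 V c1 c2 c3 c4 c5 a b c d e \<longrightarrow> w5 V c1 c2 c3 c4 c5 a b c (\<not>d) (\<not>e) \<longrightarrow> w5 V c1 c2 c3 c4 c5 a b c (\<not>d) e \<or> w5 V c1 c2 c3 c4 c5 a b c d (\<not>e)" for a b c d e
    unfolding w5_def using pw_sq[OF assms(1), of 3 4 "[a,b,c,d,e]"] by simp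
  have sq34: "\<forall>a b c d e. w5 V c1 c2 c3 c4 c5 a b c d e \<longrightarrow> w5 V c1 c2 c3 c4 c5 a b c (\<not>d) (\<not>e) \<longrightarrow> w5 V c1 c2 c3 c4 c5 a b c (\<not>d) e \<or> w5 V c1 c2 c3 c4 c5 a b c d (\<not>e)" by (intro allI) (rule sq340)
  have card4: "card {x,y,z,u} = 4" if "distinct [x,y,z,u]" for x y z u :: nat
    using that by simp
  have n1: "\<exists>b c d e. \<forall>a. \<not> w5 V c1 c2 c3 c4 c5 a b c d e"
  proof -
    obtain s where s: "\<forall>v\<in>V. \<exists>c\<in>{c2,c3,c4,c5}. (c \<in> v) \<noteq> s c"
      using nf_pat[of "{c2,c3,c4,c5}" "{c2,c3,c4,c5}"] card4[of c2 c3 c4 c5] assms(1) by auto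
    have "\<forall>a. \<not> w5 V c1 c2 c3 c4 c5 a (s c2) (s c3) (s c4) (s c5)" unfolding w5_iff using s by fastforce
    then show ?thesis by blast
  qed
  have n2: "\<exists>a c d e. \<forall>b. \<not> w5 V c1 c2 c3 c4 c5 a b c d e"
  proof -
    obtain s where s: "\<forall>v\<in>V. \<exists>c\<in>{c1,c3,c4,c5}. (c \<in> v) \<noteq> s c"
      using nf_pat[of "{c1,c3,c4,c5}" "{c1,c3,c4,c5}"] card4[of c1 c3 c4 c5] assms(1) by auto
    have "\<forall>b. \<not> w5 V c1 c2 c3 c4 c5 (s c1) b (s c3) (s c4) (s c5)" unfolding w5_iff using s by fastforce
    then show ?thesis by blast
  qed
  have n3: "\<exists>a b d e. \<forall>c. \<not> w5 V c1 c2 c3 c4 c5 a b c d e"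
  proof -
    obtain s where s: "\<forall>v\<in>V. \<exists>c\<in>{c1,c2,c4,c5}. (c \<in> v) \<noteq> s c"
      using nf_pat[of "{c1,c2,c4,c5}" "{c1,c2,c4,c5}"] card4[of c1 c2 c4 c5] assms(1) by auto
    have "\<forall>c. \<not> w5 V c1 c2 c3 c4 c5 (s c1) (s c2) c (s c4) (s c5)" unfolding w5_iff using s by fastforce
    then show ?thesis by blast
  qed
  have n4: "\<exists>a b c e. \<forall>d. \<not> w5 V c1 c2 c3 c4 c5 a b c d e"
  proof -
    obtain s where s: "\<forall>v\<in>V. \<exists>c\<in>{c1,c2,c3,c5}. (c \<in> v) \<noteq> s c"
      using nf_pat[of "{c1,c2,c3,c5}" "{c1,c2,c3,c5}"] card4[of c1 c2 c3 c5] assms(1) by auto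
    have "\<forall>d. \<not> w5 V c1 c2 c3 c4 c5 (s c1) (s c2) (s c3) d (s c5)" unfolding w5_iff using s by fastforce
    then show ?thesis by blast
  qed
  have n5: "\<exists>a b c d. \<forall>e. \<not> w5 V c1 c2 c3 c4 c5 a b c d e"
  proof -
    obtain s where s: "\<forall>v\<in>V. \<exists>c\<in>{c1,c2,c3,c4}. (c \<in> v) \<noteq> s c"
      using nf_pat[of "{c1,c2,c3,c4}" "{c1,c2,c3,c4}"] card4[of c1 c2 c3 c4] assms(1) by auto
    have "\<forall>e. \<not> w5 V c1 c2 c3 c4 c5 (s c1) (s c2) (s c3) (s c4) e" unfolding w5_iff using s by fastforce
    then show ?thesis by blast
  qed
  show ?thesis unfolding ax5_def
    by (rule conjI, fact ant, rule conjI, fact sq01, rule conjI, fact sq02, rule conjI, fact sq03,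
        rule conjI, fact sq04, rule conjI, fact sq12, rule conjI, fact sq13, rule conjI, fact sq14,
        rule conjI, fact sq23, rule conjI, fact sq24, rule conjI, fact sq34, rule conjI, fact n1,
        rule conjI, fact n2, rule conjI, fact n3, rule conjI, fact n4, fact n5)
qed

lemma ax4_w4:
  assumes "distinct [c1,c2,c3,c4]" "set [c1,c2,c3,c4] \<subseteq> {0..<n}"
  shows "ax4 (w4 V c1 c2 c3 c4)"
proof -
  let ?cs = "[c1,c2,c3,c4]"
  have ant0: "w4 V c1 c2 c3 c4 (\<not>a) (\<not>b) (\<not>c) (\<not>d)" if "w4 V c1 c2 c3 c4 a b c d" for a b c d
    using pw_ant[OF assms(2), of "[a,b,c,d]"] that unfolding w4_def by simp
  have ant: "\<forall>a b c d. w4 V c1 c2 c3 c4 a b c d \<longrightarrow> w4 V c1 c2 c3 c4 (\<not>a) (\<not>b) (\<not>c) (\<not>d)"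
    by (intro allI impI) (rule ant0)
  have sq010: "w4 V c1 c2 c3 c4 a b c d \<longrightarrow> w4 V c1 c2 c3 c4 (\<not>a) (\<not>b) c d \<longrightarrow> w4 V c1 c2 c3 c4 (\<not>a) b c d \<or> w4 V c1 c2 c3 c4 a (\<not>b) c d" for a b c d
    unfolding w4_def using pw_sq[OF assms(1), of 0 1 "[a,b,c,d]"] by simp
  have sq01: "\<forall>a b c d. w4 V c1 c2 c3 c4 a b c d \<longrightarrow> w4 V c1 c2 c3 c4 (\<not>a) (\<not>b) c d \<longrightarrow> w4 V c1 c2 c3 c4 (\<not>a) b c d \<or> w4 V c1 c2 c3 c4 a (\<not>b) c d" by (intro allI) (rule sq010)
  have sq020: "w4 V c1 c2 c3 c4 a b c d \<longrightarrow> w4 V c1 c2 c3 c4 (\<not>a) b (\<not>c) d \<longrightarrow> w4 V c1 c2 c3 c4 (\<not>a) b c d \<or> w4 V c1 c2 c3 c4 a b (\<not>c) d" for a b c d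
    unfolding w4_def using pw_sq[OF assms(1), of 0 2 "[a,b,c,d]"] by simp
  have sq02: "\<forall>a b c d. w4 V c1 c2 c3 c4 a b c d \<longrightarrow> w4 V c1 c2 c3 c4 (\<not>a) b (\<not>c) d \<longrightarrow> w4 V c1 c2 c3 c4 (\<not>a) b c d \<or> w4 V c1 c2 c3 c4 a b (\<not>c) d" by (intro allI) (rule sq020)
  have sq030: "w4 V c1 c2 c3 c4 a b c d \<longrightarrow> w4 V c1 c2 c3 c4 (\<not>a) b c (\<not>d) \<longrightarrow> w4 V c1 c2 c3 c4 (\<not>a) b c d \<or> w4 V c1 c2 c3 c4 a b c (\<not>d)" for a b c d
    unfolding w4_def using pw_sq[OF assms(1), of 0 3 "[a,b,c,d]"] by simp
  have sq03: "\<forall>a b c d. w4 V c1 c2 c3 c4 a b c d \<longrightarrow> w4 V c1 c2 c3 c4 (\<not>a) b c (\<not>d) \<longrightarrow> w4 V c1 c2 c3 c4 (\<not>a) b c d \<or> w4 V c1 c2 c3 c4 a b c (\<not>d)" by (intro allI) (rule sq030)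
  have sq120: "w4 V c1 c2 c3 c4 a b c d \<longrightarrow> w4 V c1 c2 c3 c4 a (\<not>b) (\<not>c) d \<longrightarrow> w4 V c1 c2 c3 c4 a (\<not>b) c d \<or> w4 V c1 c2 c3 c4 a b (\<not>c) d" for a b c d
    unfolding w4_def using pw_sq[OF assms(1), of 1 2 "[a,b,c,d]"] by simp
  have sq12: "\<forall>a b c d. w4 V c1 c2 c3 c4 a b c d \<longrightarrow> w4 V c1 c2 c3 c4 a (\<not>b) (\<not>c) d \<longrightarrow> w4 V c1 c2 c3 c4 a (\<not>b) c d \<or> w4 V c1 c2 c3 c4 a b (\<not>c) d" by (intro allI) (rule sq120)
  have sq130: "w4 V c1 c2 c3 c4 a b c d \<longrightarrow> w4 V c1 c2 c3 c4 a (\<not>b) c (\<not>d) \<longrightarrow> w4 V c1 c2 c3 c4 a (\<not>b) c d \<or> w4 V c1 c2 c3 c4 a b c (\<not>d)" for a b c d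
    unfolding w4_def using pw_sq[OF assms(1), of 1 3 "[a,b,c,d]"] by simp
  have sq13: "\<forall>a b c d. w4 V c1 c2 c3 c4 a b c d \<longrightarrow> w4 V c1 c2 c3 c4 a (\<not>b) c (\<not>d) \<longrightarrow> w4 V c1 c2 c3 c4 a (\<not>b) c d \<or> w4 V c1 c2 c3 c4 a b c (\<not>d)" by (intro allI) (rule sq130)
  have sq230: "w4 V c1 c2 c3 c4 a b c d \<longrightarrow> w4 V c1 c2 c3 c4 a b (\<not>c) (\<not>d) \<longrightarrow> w4 V c1 c2 c3 c4 a b (\<not>c) d \<or> w4 V c1 c2 c3 c4 a b c (\<not>d)" for a b c d
    unfolding w4_def using pw_sq[OF assms(1), of 2 3 "[a,b,c,d]"] by simp
  have sq23: "\<forall>a b c d. w4 V c1 c2 c3 c4 a b c d \<longrightarrow> w4 V c1 c2 c3 c4 a b (\<not>c) (\<not>d) \<longrightarrow> w4 V c1 c2 c3 c4 a b (\<not>c) d \<or> w4 V c1 c2 c3 c4 a b c (\<not>d)" by (intro allI) (rule sq230)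
  have n: "\<exists>a b c d. \<not> w4 V c1 c2 c3 c4 a b c d"
  proof -
    have "card {c1,c2,c3,c4} = 4" using assms(1) by simp
    then obtain s where s: "\<forall>v\<in>V. \<exists>c\<in>{c1,c2,c3,c4}. (c \<in> v) \<noteq> s c"
      using nf_pat[of "{c1,c2,c3,c4}" "{c1,c2,c3,c4}"] by auto
    have "\<not> w4 V c1 c2 c3 c4 (s c1) (s c2) (s c3) (s c4)" unfolding w4_iff using s by fastforce
    then show ?thesis by blast
  qed
  show ?thesis unfolding ax4_def
    by (rule conjI, fact ant, rule conjI, fact sq01, rule conjI, fact sq02, rule conjI, fact sq03,
        rule conjI, fact sq12, rule conjI, fact sq13, rule conjI, fact sq23, fact n)
qed

end

definition reg3 :: "nat set set \<Rightarrow> nat \<Rightarrow> nat \<Rightarrow> nat \<Rightarrow> bool \<Rightarrow> bool \<Rightarrow> bool \<Rightarrow> nat set set" where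
  "reg3 V e a b s1 s2 s3 = {v \<in> V. (e \<in> v) = s1 \<and> (a \<in> v) = s2 \<and> (b \<in> v) = s3}"

definition side3 :: "nat set set \<Rightarrow> nat \<Rightarrow> nat \<Rightarrow> nat \<Rightarrow> bool \<Rightarrow> bool \<Rightarrow> bool \<Rightarrow> nat set set" where
  "side3 V e a b s1 s2 s3 = {v \<in> reg3 V e a b s1 s2 s3. flip a v \<in> V}"

definition full3 :: "nat set set \<Rightarrow> nat \<Rightarrow> nat \<Rightarrow> nat \<Rightarrow> bool" where
  "full3 V e a b \<longleftrightarrow> (\<forall>p1 p2 p3. \<exists>v\<in>V. (e \<in> v) = p1 \<and> (a \<in> v) = p2 \<and> (b \<in> v) = p3)"

definition tri :: "nat set set \<Rightarrow> nat \<Rightarrow> nat \<Rightarrow> nat \<Rightarrow> bool" where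
  "tri V e a b \<longleftrightarrow> a \<noteq> e \<and> b \<noteq> e \<and> a \<noteq> b \<and> full3 V e a b"

context pcl begin

lemma finite_V: "finite V"
  using sub by (meson finite_Pow_iff finite_atLeastLessThan finite_subset)

lemma full3_lt: assumes "full3 V e a b" shows "e < n" "a < n" "b < n"
proof -
  obtain v where "v \<in> V" "e \<in> v" "a \<in> v" "b \<in> v" using assms unfolding full3_def by blast
  then show "e < n" "a < n" "b < n" using subn by auto
qed

lemma adjS:
  assumes "u \<in> V" "w \<in> V" "x \<in> S" "(x \<in> u) \<noteq> (x \<in> w)" "\<forall>i\<in>S. i \<noteq> x \<longrightarrow> (i \<in> u) = (i \<in> w)"
  shows "\<exists>v\<in>V. (\<forall>i\<in>S. (i \<in> v) = (i \<in> u)) \<and> flip x v \<in> V"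
proof -
  obtain v t where vt: "v \<in> V" "t \<in> S" "\<forall>i\<in>S. (i \<in> v) = (i \<in> u)" "flip t v \<in> V" "(t \<in> u) \<noteq> (t \<in> w)"
    using first_change[OF assms(1,2,3,4)] by blast
  have "t = x" using vt(2,5) assms(5) by blast
  then show ?thesis using vt by blast
qed

lemma adj4:
  assumes "distinct [c1,c2,c3,c4]" "w4 V c1 c2 c3 c4 p1 p2 p3 p4" "w4 V c1 c2 c3 c4 p1 (\<not>p2) p3 p4"
  shows "\<exists>v\<in>V. (c1 \<in> v) = p1 \<and> (c2 \<in> v) = p2 \<and> (c3 \<in> v) = p3 \<and> (c4 \<in> v) = p4 \<and> flip c2 v \<in> V"
proof -
  obtain u where u: "u \<in> V" "(c1 \<in> u) = p1" "(c2 \<in> u) = p2" "(c3 \<in> u) = p3" "(c4 \<in> u) = p4"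
    using assms(2) unfolding w4_iff by blast
  obtain w where w: "w \<in> V" "(c1 \<in> w) = p1" "(c2 \<in> w) = (\<not>p2)" "(c3 \<in> w) = p3" "(c4 \<in> w) = p4"
    using assms(3) unfolding w4_iff by blast
  have "\<exists>v\<in>V. (\<forall>i\<in>{c1,c2,c3,c4}. (i \<in> v) = (i \<in> u)) \<and> flip c2 v \<in> V"
    using assms(1) u w by (intro adjS[OF u(1) w(1)]) auto
  then show ?thesis using u by auto
qed

lemma adj5:
  assumes "distinct [c1,c2,c3,c4,c5]" "w5 V c1 c2 c3 c4 c5 p1 p2 p3 p4 p5" "w5 V c1 c2 c3 c4 c5 p1 (\<not>p2) p3 p4 p5"
  shows "\<exists>v\<in>V. (c1 \<in> v) = p1 \<and> (c2 \<in> v) = p2 \<and> (c3 \<in> v) = p3 \<and> (c4 \<in> v) = p4 \<and> (c5 \<in> v) = p5 \<and> flip c2 v \<in> V"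
proof -
  obtain u where u: "u \<in> V" "(c1 \<in> u) = p1" "(c2 \<in> u) = p2" "(c3 \<in> u) = p3" "(c4 \<in> u) = p4" "(c5 \<in> u) = p5"
    using assms(2) unfolding w5_iff by blast
  obtain w where w: "w \<in> V" "(c1 \<in> w) = p1" "(c2 \<in> w) = (\<not>p2)" "(c3 \<in> w) = p3" "(c4 \<in> w) = p4" "(c5 \<in> w) = p5"
    using assms(3) unfolding w5_iff by blast
  have "\<exists>v\<in>V. (\<forall>i\<in>{c1,c2,c3,c4,c5}. (i \<in> v) = (i \<in> u)) \<and> flip c2 v \<in> V"
    using assms(1) u w by (intro adjS[OF u(1) w(1)]) auto
  then show ?thesis using u by auto
qed

lemma side3_nonempty:
  assumes "full3 V e a b" "distinct [e,a,b]"
  shows "side3 V e a b s1 s2 s3 \<noteq> {}"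
proof -
  obtain u where u: "u \<in> V" "(e \<in> u) = s1" "(a \<in> u) = s2" "(b \<in> u) = s3"
    using assms(1) unfolding full3_def by blast
  obtain w where w: "w \<in> V" "(e \<in> w) = s1" "(a \<in> w) = (\<not>s2)" "(b \<in> w) = s3"
    using assms(1) unfolding full3_def by blast
  obtain v where v: "v \<in> V" "\<forall>i\<in>{e,a,b}. (i \<in> v) = (i \<in> u)" "flip a v \<in> V"
    using adjS[OF u(1) w(1), of a "{e,a,b}"] assms(2) u w by auto
  then have "v \<in> side3 V e a b s1 s2 s3" unfolding side3_def reg3_def using u by auto
  then show ?thesis by blast
qed

lemma reg3_nonempty:
  assumes "full3 V e a b"
  shows "reg3 V e a b s1 s2 s3 \<noteq> {}"
proof -
  obtain v where "v \<in> V" "(e \<in> v) = s1" "(a \<in> v) = s2" "(b \<in> v) = s3"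
    using assms[unfolded full3_def, rule_format, of s1 s2 s3] by blast
  then have "v \<in> reg3 V e a b s1 s2 s3" unfolding reg3_def by blast
  then show ?thesis by blast
qed

lemma singleton_deg:
  assumes "full3 V e a b" "distinct [e,a,b]" "reg3 V e a b s1 s2 s3 = {v}"
  shows "degree V v = 3 \<and> flip e v \<in> V"
proof -
  have vV: "v \<in> V" and vs: "(e \<in> v) = s1" "(a \<in> v) = s2" "(b \<in> v) = s3"
    using assms(3) unfolding reg3_def by auto
  have uniq: "\<And>u. u \<in> V \<Longrightarrow> (e \<in> u) = s1 \<Longrightarrow> (a \<in> u) = s2 \<Longrightarrow> (b \<in> u) = s3 \<Longrightarrow> u = v"
    using assms(3) unfolding reg3_def by blast
  have fl: "flip x v \<in> V" if x: "x \<in> {e,a,b}" for x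
  proof -
    obtain w where w: "w \<in> V" "\<forall>i\<in>{e,a,b}. (i \<in> w) = ((i \<in> v) \<noteq> (i = x))"
    proof -
      obtain w where "w \<in> V" "(e \<in> w) = ((e \<in> v) \<noteq> (e = x))" "(a \<in> w) = ((a \<in> v) \<noteq> (a = x))" "(b \<in> w) = ((b \<in> v) \<noteq> (b = x))"
        using assms(1) unfolding full3_def by blast
      then show ?thesis using that by auto
    qed
    obtain v' where v': "v' \<in> V" "\<forall>i\<in>{e,a,b}. (i \<in> v') = (i \<in> v)" "flip x v' \<in> V"
      using adjS[OF vV w(1) x] w(2) x by auto
    have "v' = v" using uniq v' vs by auto
    then show ?thesis using v' by simp
  qed
  have nb: "{u \<in> V. hadj u v} = {flip e v, flip a v, flip b v}"
  proof
    show "{u \<in> V. hadj u v} \<subseteq> {flip e v, flip a v, flip b v}"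
    proof
      fix u assume "u \<in> {u \<in> V. hadj u v}"
      then have uV: "u \<in> V" and h: "hadj v u" using hadj_sym by auto
      obtain t where t: "u = flip t v" using hadj_flip[OF h] by blast
      show "u \<in> {flip e v, flip a v, flip b v}"
      proof (rule ccontr)
        assume "u \<notin> {flip e v, flip a v, flip b v}"
        then have "t \<noteq> e" "t \<noteq> a" "t \<noteq> b" using t by auto
        then have "u = v" using uniq[OF uV] vs t by (auto simp: flip_mem)
        then show False using t flip_neq by metis
      qed
    qed
  next
    show "{flip e v, flip a v, flip b v} \<subseteq> {u \<in> V. hadj u v}"
      using fl hadj_flip_self hadj_sym by auto
  qed
  have "card {flip e v, flip a v, flip b v} = 3"
  proof -
    have "flip e v \<noteq> flip a v" "flip e v \<noteq> flip b v" "flip a v \<noteq> flip b v"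
      using assms(2) by (auto simp: set_eq_iff flip_mem)
    then show ?thesis by simp
  qed
  then show ?thesis unfolding degree_def using nb fl by simp
qed

end

context pcl begin

lemma finite_side3: "finite (side3 V e a b s1 s2 s3)"
  using finite_V unfolding side3_def reg3_def by simp

lemma finite_reg3: "finite (reg3 V e a b s1 s2 s3)"
  using finite_V unfolding reg3_def by simp

lemma full3_w4:
  assumes "full3 V e a b"
  shows "\<forall>p1 p2 p3. \<exists>p4. w4 V e a b j p1 p2 p3 p4"
proof (intro allI)
  fix p1 p2 p3
  obtain v where "v \<in> V" "(e \<in> v) = p1" "(a \<in> v) = p2" "(b \<in> v) = p3"
    using assms[unfolded full3_def, rule_format, of p1 p2 p3] by blast
  then show "\<exists>p4. w4 V e a b j p1 p2 p3 p4" unfolding w4_iff by blast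
qed

lemma exists_unc:
  assumes e: "e < n" and t0: "tri V e a0 b0"
  shows "\<exists>a b s1 s2 s3. tri V e a b \<and> card (side3 V e a b s1 s2 s3) = 1"
proof -
  define f where "f = (\<lambda>(a, b, s1, s2, s3). card (side3 V e a b s1 s2 s3))"
  define Q where "Q = (\<lambda>(a::nat, b::nat, s1::bool, s2::bool, s3::bool). tri V e a b)"
  have "Q (a0, b0, True, True, True)" using t0 unfolding Q_def by simp
  then obtain x where x: "Q x" "\<forall>y. Q y \<longrightarrow> f x \<le> f y" using ex_has_least_nat[of Q _ f] by blast
  obtain a b s1 s2 s3 where xd: "x = (a, b, s1, s2, s3)" by (cases x) auto
  have tri: "tri V e a b" using x(1) xd unfolding Q_def by simp
  have minf: "\<And>a' b' t1 t2 t3. tri V e a' b' \<Longrightarrow> card (side3 V e a b s1 s2 s3) \<le> card (side3 V e a' b' t1 t2 t3)"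
    using x(2) xd unfolding Q_def f_def by fastforce
  have fl: "full3 V e a b" and dist: "distinct [e,a,b]" using tri unfolding tri_def by auto
  let ?A = "side3 V e a b s1 s2 s3"
  have "?A \<noteq> {}" using side3_nonempty[OF fl dist] .
  then have c1: "card ?A \<ge> 1" using finite_side3 by (simp add: Suc_leI card_gt_0_iff)
  have "card ?A = 1"
  proof (rule ccontr)
    assume "card ?A \<noteq> 1"
    then have "card ?A \<ge> 2" using c1 by simp
    then obtain p q where pq: "p \<in> ?A" "q \<in> ?A" "p \<noteq> q"
      using finite_side3 by (metis One_nat_def card_le_Suc0_iff_eq not_less_eq_eq numeral_2_eq_2)
    obtain j where j: "(j \<in> p) \<noteq> (j \<in> q)" using pq(3) by blast
    have pA: "p \<in> V" "(e \<in> p) = s1" "(a \<in> p) = s2" "(b \<in> p) = s3" "flip a p \<in> V"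
      using pq(1) unfolding side3_def reg3_def by auto
    have qA: "q \<in> V" "(e \<in> q) = s1" "(a \<in> q) = s2" "(b \<in> q) = s3" "flip a q \<in> V"
      using pq(2) unfolding side3_def reg3_def by auto
    have jS: "j \<noteq> e" "j \<noteq> a" "j \<noteq> b" using j pA qA by auto
    have jn: "j < n" using j pA(1) qA(1) subn by blast
    have lt: "e < n" "a < n" "b < n" using full3_lt[OF fl] by auto
    let ?w = "w4 V e a b j"
    have ax: "ax4 ?w" using dist jS jn lt by (intro ax4_w4) auto
    have fw: "\<forall>p1 p2 p3. \<exists>p4. ?w p1 p2 p3 p4" using full3_w4[OF fl] .
    have wp: "?w s1 s2 s3 (j \<in> p)" "?w s1 (\<not>s2) s3 (j \<in> p)"
      using w4_I[OF pA(1), of e a b j] w4_I[OF pA(5), of e a b j] pA jS dist by (simp_all add: flip_mem)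
    have wq: "?w s1 s2 s3 (j \<in> q)" "?w s1 (\<not>s2) s3 (j \<in> q)"
      using w4_I[OF qA(1), of e a b j] w4_I[OF qA(5), of e a b j] qA jS dist by (simp_all add: flip_mem)
    have spl: "?w s1 s2 s3 True \<and> ?w s1 (\<not>s2) s3 True \<and> ?w s1 s2 s3 False \<and> ?w s1 (\<not>s2) s3 False"
      using wp wq j by (cases "j \<in> p") auto
    obtain t1 t2 where fj: "\<forall>p1 p2 p4. \<exists>p3. ?w p1 p2 p3 p4"
      and sub: "\<forall>c. ?w s1 t1 c t2 \<and> ?w s1 (\<not>t1) c t2 \<longrightarrow> c = s3"
      using claimE[OF ax fw spl] by blast
    have fl': "full3 V e a j"
      unfolding full3_def
    proof (intro allI)
      fix p1 p2 p4
      obtain p3 where "?w p1 p2 p3 p4" using fj by blast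
      then show "\<exists>v\<in>V. (e \<in> v) = p1 \<and> (a \<in> v) = p2 \<and> (j \<in> v) = p4" unfolding w4_iff by blast
    qed
    have tri': "tri V e a j" using fl' jS dist unfolding tri_def by auto
    obtain x where x: "x \<in> ?A" "(j \<in> x) \<noteq> t2" using pq j by blast
    let ?A' = "side3 V e a j s1 t1 t2"
    have inA': "(b \<in> v) = s3" if v: "v \<in> ?A'" for v
    proof -
      have vA: "v \<in> V" "(e \<in> v) = s1" "(a \<in> v) = t1" "(j \<in> v) = t2" "flip a v \<in> V"
        using v unfolding side3_def reg3_def by auto
      have "?w s1 t1 (b \<in> v) t2" using w4_I[OF vA(1), of e a b j] vA by simp
      moreover have "?w s1 (\<not>t1) (b \<in> v) t2"
        using w4_I[OF vA(5), of e a b j] vA jS dist by (simp add: flip_mem)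
      ultimately show ?thesis using sub by blast
    qed
    have "card ?A' < card ?A"
    proof (cases "t1 = s2")
      case True
      have "?A' \<subseteq> ?A - {x}"
      proof
        fix v assume v: "v \<in> ?A'"
        have "(b \<in> v) = s3" using inA'[OF v] .
        then show "v \<in> ?A - {x}" using v x True unfolding side3_def reg3_def by auto
      qed
      then have "card ?A' \<le> card (?A - {x})" using finite_side3 by (intro card_mono) auto
      also have "\<dots> < card ?A" by (rule card_Diff1_less[OF finite_side3 x(1)])
      finally show ?thesis .
    next
      case False
      have "?A' \<subseteq> flip a ` (?A - {x})"
      proof
        fix v assume v: "v \<in> ?A'"
        have vA: "v \<in> V" "(e \<in> v) = s1" "(a \<in> v) = t1" "(j \<in> v) = t2" "flip a v \<in> V"
          using v unfolding side3_def reg3_def by auto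
        have bv: "(b \<in> v) = s3" using inA'[OF v] .
        have "flip a v \<in> ?A" unfolding side3_def reg3_def
          using vA bv False jS dist by (auto simp: flip_mem)
        moreover have "flip a v \<noteq> x" using vA x jS by (auto simp: flip_mem)
        ultimately show "v \<in> flip a ` (?A - {x})" by (metis DiffI flip_flip image_eqI singletonD)
      qed
      then have "card ?A' \<le> card (flip a ` (?A - {x}))" using finite_side3 by (intro card_mono) auto
      also have "\<dots> \<le> card (?A - {x})" by (rule card_image_le) (use finite_side3 in simp)
      also have "\<dots> < card ?A" by (rule card_Diff1_less[OF finite_side3 x(1)])
      finally show ?thesis .
    qed
    moreover have "card ?A \<le> card ?A'" using minf[OF tri'] .
    ultimately show False by simp
  qed
  then show ?thesis using tri by blast
qed

end

context pcl begin

lemma full3_w5: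
  assumes "full3 V e a b"
  shows "\<forall>p1 p2 p3. \<exists>p4 p5. w5 V e a b k j p1 p2 p3 p4 p5"
proof (intro allI)
  fix p1 p2 p3
  obtain v where "v \<in> V" "(e \<in> v) = p1" "(a \<in> v) = p2" "(b \<in> v) = p3"
    using assms[unfolded full3_def, rule_format, of p1 p2 p3] by blast
  then show "\<exists>p4 p5. w5 V e a b k j p1 p2 p3 p4 p5" unfolding w5_iff by blast
qed

lemma full3_w5K:
  assumes "full3 V e b k"
  shows "\<forall>p1 p3 p4. \<exists>p2 p5. w5 V e a b k j p1 p2 p3 p4 p5"
proof (intro allI)
  fix p1 p3 p4
  obtain v where "v \<in> V" "(e \<in> v) = p1" "(b \<in> v) = p3" "(k \<in> v) = p4"
    using assms[unfolded full3_def, rule_format, of p1 p3 p4] by blast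
  then show "\<exists>p2 p5. w5 V e a b k j p1 p2 p3 p4 p5" unfolding w5_iff by blast
qed

lemma lemmaU:
  "card (reg3 V e a b s1 s2 s3) = m \<Longrightarrow> tri V e a b \<Longrightarrow> card (side3 V e a b s1 s2 s3) = 1
   \<Longrightarrow> \<exists>v\<in>V. degree V v = 3 \<and> flip e v \<in> V"
proof (induction m arbitrary: a b s1 s2 s3 rule: less_induct)
  case (less m)
  let ?R = "reg3 V e a b s1 s2 s3"
  let ?A = "side3 V e a b s1 s2 s3"
  have fl: "full3 V e a b" and dist: "distinct [e,a,b]" using less.prems(2) unfolding tri_def by auto
  have lt: "e < n" "a < n" "b < n" using full3_lt[OF fl] by auto
  have Rne: "?R \<noteq> {}" using reg3_nonempty[OF fl] .
  obtain z where Az: "?A = {z}" using less.prems(3) card_1_singletonE by blast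
  show ?case
  proof (cases "card ?R = 1")
    case True
    then obtain v where "?R = {v}" using card_1_singletonE by blast
    then have "degree V v = 3 \<and> flip e v \<in> V" using singleton_deg[OF fl dist] by blast
    moreover have "v \<in> V" using \<open>?R = {v}\<close> unfolding reg3_def by auto
    ultimately show ?thesis by blast
  next
    case False
    then have "card ?R \<ge> 2" using Rne finite_reg3
      by (metis One_nat_def Suc_leI card_gt_0_iff le_antisym not_less_eq_eq numeral_2_eq_2)
    then obtain v0 v1 where v01: "v0 \<in> ?R" "v1 \<in> ?R" "v0 \<noteq> v1"
      using finite_reg3 by (metis One_nat_def card_le_Suc0_iff_eq not_less_eq_eq numeral_2_eq_2)
    obtain k0 where k0: "(k0 \<in> v0) \<noteq> (k0 \<in> v1)" using v01(3) by blast
    have v0R: "v0 \<in> V" "(e \<in> v0) = s1" "(a \<in> v0) = s2" "(b \<in> v0) = s3" using v01(1) unfolding reg3_def by auto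
    have v1R: "v1 \<in> V" "(e \<in> v1) = s1" "(a \<in> v1) = s2" "(b \<in> v1) = s3" using v01(2) unfolding reg3_def by auto
    have k0S: "k0 \<noteq> e" "k0 \<noteq> a" "k0 \<noteq> b" using k0 v0R v1R by auto
    have k0n: "k0 < n" using k0 v0R(1) v1R(1) subn by blast
    have unsplitA: "x = y" if "x \<in> ?A" "y \<in> ?A" for x y using that Az by blast
    define Kp where "Kp = (\<lambda>(k, c). k \<noteq> e \<and> k \<noteq> a \<and> k \<noteq> b \<and> k < n \<and> full3 V e b k
       \<and> (\<forall>v\<in>V. (e \<in> v) = s1 \<and> (b \<in> v) = s3 \<and> (k \<in> v) = c \<longrightarrow> (a \<in> v) = s2)
       \<and> (\<exists>v\<in>?R. (k \<in> v) \<noteq> c))"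
    define g where "g = (\<lambda>(k, c). card (side3 V e b k s1 s3 c))"
    have Kne: "\<exists>c. Kp (k0, c)"
    proof -
      let ?w = "w4 V e a b k0"
      have ax: "ax4 ?w" using dist k0S k0n lt by (intro ax4_w4) auto
      have fw: "\<forall>p1 p2 p3. \<exists>p4. ?w p1 p2 p3 p4" using full3_w4[OF fl] .
      have wv: "?w s1 s2 s3 (k0 \<in> v0)" "?w s1 s2 s3 (k0 \<in> v1)"
        using w4_I[OF v0R(1), of e a b k0] w4_I[OF v1R(1), of e a b k0] v0R v1R by simp_all
      have splR: "?w s1 s2 s3 True \<and> ?w s1 s2 s3 False" using wv k0 by (cases "k0 \<in> v0") auto
      have nspl: "\<not> (?w s1 s2 s3 True \<and> ?w s1 (\<not>s2) s3 True \<and> ?w s1 s2 s3 False \<and> ?w s1 (\<not>s2) s3 False)"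
      proof
        assume H: "?w s1 s2 s3 True \<and> ?w s1 (\<not>s2) s3 True \<and> ?w s1 s2 s3 False \<and> ?w s1 (\<not>s2) s3 False"
        have d4: "distinct [e,a,b,k0]" using dist k0S by auto
        obtain x where x: "x \<in> V" "(e \<in> x) = s1" "(a \<in> x) = s2" "(b \<in> x) = s3" "k0 \<in> x" "flip a x \<in> V"
          using adj4[OF d4, of s1 s2 s3 True] H by auto
        obtain y where y: "y \<in> V" "(e \<in> y) = s1" "(a \<in> y) = s2" "(b \<in> y) = s3" "k0 \<notin> y" "flip a y \<in> V"
          using adj4[OF d4, of s1 s2 s3 False] H by auto
        have "x \<in> ?A" "y \<in> ?A" using x y unfolding side3_def reg3_def by auto
        then have "x = y" by (rule unsplitA)
        then show False using x(5) y(5) by simp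
      qed
      obtain c where fK: "\<forall>p1 p3 p4. \<exists>p2. ?w p1 p2 p3 p4" and sub: "\<forall>p2. ?w s1 p2 s3 c \<longrightarrow> p2 = s2"
        using claimU1[OF ax fw splR nspl] by blast
      have flK: "full3 V e b k0" unfolding full3_def
      proof (intro allI)
        fix p1 p3 p4
        obtain p2 where "?w p1 p2 p3 p4" using fK by blast
        then show "\<exists>v\<in>V. (e \<in> v) = p1 \<and> (b \<in> v) = p3 \<and> (k0 \<in> v) = p4" unfolding w4_iff by blast
      qed
      have subV: "\<forall>v\<in>V. (e \<in> v) = s1 \<and> (b \<in> v) = s3 \<and> (k0 \<in> v) = c \<longrightarrow> (a \<in> v) = s2"
      proof (intro ballI impI)
        fix v assume "v \<in> V" "(e \<in> v) = s1 \<and> (b \<in> v) = s3 \<and> (k0 \<in> v) = c"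
        then show "(a \<in> v) = s2" using sub w4_I[of v V e a b k0] by auto
      qed
      have "\<exists>v\<in>?R. (k0 \<in> v) \<noteq> c" using v01 k0 by (cases "(k0 \<in> v0) = c") auto
      then show ?thesis unfolding Kp_def using k0S k0n flK subV by auto
    qed
    then obtain c0 where "Kp (k0, c0)" by blast
    then obtain kc where kc: "Kp kc" "\<forall>y. Kp y \<longrightarrow> g kc \<le> g y" using ex_has_least_nat[of Kp _ g] by blast
    obtain k c where kcd: "kc = (k, c)" by (cases kc) auto
    have kS: "k \<noteq> e" "k \<noteq> a" "k \<noteq> b" and kn: "k < n" and flK: "full3 V e b k"
      and subK: "\<forall>v\<in>V. (e \<in> v) = s1 \<and> (b \<in> v) = s3 \<and> (k \<in> v) = c \<longrightarrow> (a \<in> v) = s2"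
      and propK: "\<exists>v\<in>?R. (k \<in> v) \<noteq> c"
      using kc(1) kcd unfolding Kp_def by auto
    have ming: "\<And>k' c'. Kp (k', c') \<Longrightarrow> card (side3 V e b k s1 s3 c) \<le> card (side3 V e b k' s1 s3 c')"
      using kc(2) kcd unfolding g_def by fastforce
    let ?R' = "reg3 V e b k s1 s3 c"
    let ?B = "side3 V e b k s1 s3 c"
    have distK: "distinct [e,b,k]" using dist kS by auto
    have R'R: "?R' \<subseteq> ?R" using subK unfolding reg3_def by auto
    have R'lt: "card ?R' < card ?R"
    proof -
      obtain v where v: "v \<in> ?R" "(k \<in> v) \<noteq> c" using propK by blast
      have "v \<notin> ?R'" using v unfolding reg3_def by auto
      then have "?R' \<subset> ?R" using R'R v(1) by blast
      then show ?thesis by (rule psubset_card_mono[OF finite_reg3])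
    qed
    have triK: "tri V e b k" using flK distK unfolding tri_def by auto
    have Bne: "?B \<noteq> {}" using side3_nonempty[OF flK distK] .
    show ?thesis
    proof (cases "card ?B = 1")
      case True
      show ?thesis using less.IH[OF _ refl triK True] R'lt less.prems(1) by simp
    next
      case False
      then have "card ?B \<ge> 2" using Bne finite_side3
        by (metis One_nat_def Suc_leI card_gt_0_iff le_antisym not_less_eq_eq numeral_2_eq_2)
      then obtain y0 y1 where y01: "y0 \<in> ?B" "y1 \<in> ?B" "y0 \<noteq> y1"
        using finite_side3 by (metis One_nat_def card_le_Suc0_iff_eq not_less_eq_eq numeral_2_eq_2)
      obtain j where j: "(j \<in> y0) \<noteq> (j \<in> y1)" using y01(3) by blast
      have y0B: "y0 \<in> V" "(e \<in> y0) = s1" "(b \<in> y0) = s3" "(k \<in> y0) = c" "flip b y0 \<in> V"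
        using y01(1) unfolding side3_def reg3_def by auto
      have y1B: "y1 \<in> V" "(e \<in> y1) = s1" "(b \<in> y1) = s3" "(k \<in> y1) = c" "flip b y1 \<in> V"
        using y01(2) unfolding side3_def reg3_def by auto
      have y0a: "(a \<in> y0) = s2" using subK y0B by blast
      have y1a: "(a \<in> y1) = s2" using subK y1B by blast
      have jS: "j \<noteq> e" "j \<noteq> a" "j \<noteq> b" "j \<noteq> k" using j y0B y1B y0a y1a by auto
      have jn: "j < n" using j y0B(1) y1B(1) subn by blast
      have d5: "distinct [e,a,b,k,j]" using dist kS jS by auto
      let ?w = "w5 V e a b k j"
      have ax: "ax5 ?w" using d5 lt kn jn by (intro ax5_w5) auto
      have fA: "\<forall>p1 p2 p3. \<exists>p4 p5. ?w p1 p2 p3 p4 p5" using full3_w5[OF fl] .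
      have fK: "\<forall>p1 p3 p4. \<exists>p2 p5. ?w p1 p2 p3 p4 p5" using full3_w5K[OF flK] .
      have uk: "\<forall>p4 p5 p4' p5'. ?w s1 s2 s3 p4 p5 \<and> ?w s1 (\<not>s2) s3 p4 p5 \<and> ?w s1 s2 s3 p4' p5' \<and> ?w s1 (\<not>s2) s3 p4' p5' \<longrightarrow> p4 = p4' \<and> p5 = p5'"
      proof (intro allI impI)
        fix p4 p5 p4' p5'
        assume H: "?w s1 s2 s3 p4 p5 \<and> ?w s1 (\<not>s2) s3 p4 p5 \<and> ?w s1 s2 s3 p4' p5' \<and> ?w s1 (\<not>s2) s3 p4' p5'"
        obtain x where x: "x \<in> V" "(e \<in> x) = s1" "(a \<in> x) = s2" "(b \<in> x) = s3" "(k \<in> x) = p4" "(j \<in> x) = p5" "flip a x \<in> V"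
          using adj5[OF d5, of s1 s2 s3 p4 p5] H by auto
        obtain y where y: "y \<in> V" "(e \<in> y) = s1" "(a \<in> y) = s2" "(b \<in> y) = s3" "(k \<in> y) = p4'" "(j \<in> y) = p5'" "flip a y \<in> V"
          using adj5[OF d5, of s1 s2 s3 p4' p5'] H by auto
        have "x \<in> ?A" "y \<in> ?A" using x y unfolding side3_def reg3_def by auto
        then have "x = y" by (rule unsplitA)
        then show "p4 = p4' \<and> p5 = p5'" using x y by simp
      qed
      have ksub: "\<forall>p2 p5. ?w s1 p2 s3 c p5 \<longrightarrow> p2 = s2"
      proof (intro allI impI)
        fix p2 p5 assume "?w s1 p2 s3 c p5"
        then obtain v where "v \<in> V" "(e \<in> v) = s1" "(a \<in> v) = p2" "(b \<in> v) = s3" "(k \<in> v) = c" unfolding w5_iff by blast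
        then show "p2 = s2" using subK by blast
      qed
      have wy: "?w s1 s2 s3 c (j \<in> y0)" "?w s1 s2 (\<not>s3) c (j \<in> y0)" "?w s1 s2 s3 c (j \<in> y1)" "?w s1 s2 (\<not>s3) c (j \<in> y1)"
        using w5_I[OF y0B(1), of e a b k j] w5_I[OF y0B(5), of e a b k j]
          w5_I[OF y1B(1), of e a b k j] w5_I[OF y1B(5), of e a b k j] y0B y1B y0a y1a d5 kS jS
        by (simp_all add: flip_mem)
      have spl: "?w s1 s2 s3 c True \<and> ?w s1 s2 (\<not>s3) c True \<and> ?w s1 s2 s3 c False \<and> ?w s1 s2 (\<not>s3) c False"
        using wy j by (cases "j \<in> y0") auto
      obtain c' where fJ: "\<forall>p1 p3 p5. \<exists>p2 p4. ?w p1 p2 p3 p4 p5"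
        and subJ: "\<forall>p2 p4. ?w s1 p2 s3 p4 c' \<longrightarrow> p2 = s2"
        and sideJ: "\<forall>p2 p4. ?w s1 p2 s3 p4 c' \<and> ?w s1 p2 (\<not>s3) p4 c' \<longrightarrow> p4 = c"
        using claimU2[OF ax fA fK uk ksub spl] by blast
      have flJ: "full3 V e b j" unfolding full3_def
      proof (intro allI)
        fix p1 p3 p5
        obtain p2 p4 where "?w p1 p2 p3 p4 p5" using fJ by blast
        then show "\<exists>v\<in>V. (e \<in> v) = p1 \<and> (b \<in> v) = p3 \<and> (j \<in> v) = p5" unfolding w5_iff by blast
      qed
      have subVJ: "\<forall>v\<in>V. (e \<in> v) = s1 \<and> (b \<in> v) = s3 \<and> (j \<in> v) = c' \<longrightarrow> (a \<in> v) = s2"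
      proof (intro ballI impI)
        fix v assume "v \<in> V" "(e \<in> v) = s1 \<and> (b \<in> v) = s3 \<and> (j \<in> v) = c'"
        then show "(a \<in> v) = s2" using subJ w5_I[of v V e a b k j] by auto
      qed
      obtain y where y: "y \<in> ?B" "(j \<in> y) \<noteq> c'" using y01 j by (cases "(j \<in> y0) = c'") auto
      have yR: "y \<in> ?R" using y(1) R'R unfolding side3_def by auto
      have KpJ: "Kp (j, c')" unfolding Kp_def using jS jn flJ subVJ yR y(2) by auto
      let ?B' = "side3 V e b j s1 s3 c'"
      have "?B' \<subseteq> ?B - {y}"
      proof
        fix v assume v: "v \<in> ?B'"
        have vB: "v \<in> V" "(e \<in> v) = s1" "(b \<in> v) = s3" "(j \<in> v) = c'" "flip b v \<in> V"
          using v unfolding side3_def reg3_def by auto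
        have va: "(a \<in> v) = s2" using subVJ vB by blast
        have "?w s1 s2 s3 (k \<in> v) c'" using w5_I[OF vB(1), of e a b k j] vB va by simp
        moreover have "?w s1 s2 (\<not>s3) (k \<in> v) c'"
          using w5_I[OF vB(5), of e a b k j] vB va d5 kS jS by (simp add: flip_mem)
        ultimately have "(k \<in> v) = c" using sideJ by blast
        then show "v \<in> ?B - {y}" using vB y(2) unfolding side3_def reg3_def by auto
      qed
      then have "card ?B' \<le> card (?B - {y})" using finite_side3 by (intro card_mono) auto
      also have "\<dots> < card ?B" by (rule card_Diff1_less[OF finite_side3 y(1)])
      finally have "card ?B' < card ?B" .
      moreover have "card ?B \<le> card ?B'" using ming[OF KpJ] .
      ultimately show ?thesis by simp
    qed
  qed
qed

end

lemma fold_contract: "fold contract fs V = (\<lambda>v. v - set fs) ` V"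
proof (induction fs arbitrary: V)
  case Nil
  then show ?case by simp
next
  case (Cons x fs)
  have "fold contract (x # fs) V = fold contract fs (contract x V)" by simp
  also have "\<dots> = (\<lambda>v. v - set fs) ` ((\<lambda>v. v - {x}) ` V)" using Cons unfolding contract_def by simp
  also have "\<dots> = (\<lambda>v. v - set (x # fs)) ` V" by (auto simp: image_image Diff_insert2[symmetric])
  finally show ?case .
qed

lemma iso_card:
  assumes "graph_iso X (cube r)"
  shows "card X = 2 ^ r"
proof -
  obtain \<phi> where "bij_betw \<phi> X (cube r)" using assms unfolding graph_iso_def by blast
  then have "card X = card (cube r)" by (rule bij_betw_same_card)
  then show ?thesis unfolding cube_def by (simp add: card_Pow)
qed

lemma rank_bound:
  assumes "finite V" "graph_iso (fold contract fs V) (cube r)"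
  shows "r \<le> card V"
proof -
  have "2 ^ r = card (fold contract fs V)" using iso_card[OF assms(2)] by simp
  also have "\<dots> \<le> card V" unfolding fold_contract using card_image_le[OF assms(1)] by blast
  finally have "2 ^ r \<le> card V" .
  moreover have "r < 2 ^ r" by (rule less_exp)
  ultimately show ?thesis by linarith
qed

lemma rank0:
  assumes "V \<noteq> {}" "V \<subseteq> Pow {0..<n}"
  shows "graph_iso (fold contract [0..<n] V) (cube 0)"
proof -
  have "fold contract [0..<n] V = {{}}"
    unfolding fold_contract using assms by auto
  moreover have "cube 0 = {{}}" unfolding cube_def by auto
  moreover have "graph_iso {{}} {{}}" unfolding graph_iso_def by (rule exI[of _ id]) (simp add: bij_betw_id)
  ultimately show ?thesis by simp
qed

lemma hdist_image:
  assumes "inj_on g S" "u \<subseteq> S" "v \<subseteq> S"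
  shows "hdist (g ` u) (g ` v) = hdist u v"
proof -
  have "g ` u - g ` v = g ` (u - v)" using assms by (metis Diff_subset inj_on_image_set_diff order_trans)
  moreover have "g ` v - g ` u = g ` (v - u)" using assms by (metis Diff_subset inj_on_image_set_diff order_trans)
  ultimately have "(g ` u - g ` v) \<union> (g ` v - g ` u) = g ` ((u - v) \<union> (v - u))" by auto
  moreover have "(u - v) \<union> (v - u) \<subseteq> S" using assms by auto
  then have "inj_on g ((u - v) \<union> (v - u))" using inj_on_subset[OF assms(1)] by blast
  ultimately show ?thesis unfolding hdist_def by (simp add: card_image)
qed

lemma full4_rank:
  assumes "V \<subseteq> Pow {0..<n}" "card S = 4" "fullS V S"
  shows "\<exists>fs. graph_iso (fold contract fs V) (cube 4)"
proof -
  obtain v0 where "v0 \<in> V" "\<forall>i\<in>S. i \<in> v0" using assms(3)[unfolded fullS_def, rule_format, of "\<lambda>_. True"] by auto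
  then have Sn: "S \<subseteq> {0..<n}" using assms(1) by auto
  have finS: "finite S" using assms(2) by (metis card.infinite zero_neq_numeral)
  define fs where "fs = sorted_list_of_set ({0..<n} - S)"
  have sfs: "set fs = {0..<n} - S" unfolding fs_def by simp
  have X: "fold contract fs V = Pow S"
  proof
    show "fold contract fs V \<subseteq> Pow S"
    proof
      fix x assume "x \<in> fold contract fs V"
      then obtain v where v: "v \<in> V" "x = v - ({0..<n} - S)" unfolding fold_contract sfs by blast
      have "v \<subseteq> {0..<n}" using v(1) assms(1) by blast
      then have "x \<subseteq> S" using v(2) by blast
      then show "x \<in> Pow S" by simp
    qed
  next
    show "Pow S \<subseteq> fold contract fs V"
    proof
      fix T assume T: "T \<in> Pow S"
      obtain v where v: "v \<in> V" "\<forall>i\<in>S. (i \<in> v) = (i \<in> T)"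
        using assms(3)[unfolded fullS_def, rule_format, of "\<lambda>i. i \<in> T"] by blast
      have vn: "v \<subseteq> {0..<n}" using v(1) assms(1) by blast
      have "v - set fs = T" unfolding sfs
      proof (rule set_eqI)
        fix i show "(i \<in> v - ({0..<n} - S)) = (i \<in> T)"
        proof (cases "i \<in> S")
          case True then show ?thesis using v(2) vn by auto
        next
          case False then show ?thesis using T vn by auto
        qed
      qed
      then show "T \<in> fold contract fs V" unfolding fold_contract using v(1) by blast
    qed
  qed
  obtain g where g: "bij_betw g S {0..<4::nat}" using bij_betw_iff_card[OF finS, of "{0..<4::nat}"] assms(2) by auto
  have "graph_iso (Pow S) (cube 4)" unfolding graph_iso_def cube_def
  proof (intro exI conjI)
    show "bij_betw (image g) (Pow S) (Pow {0..<4})" using g by (rule bij_betw_Pow)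
    show "\<forall>u\<in>Pow S. \<forall>v\<in>Pow S. hadj u v = hadj (g ` u) (g ` v)"
      using hdist_image[OF bij_betw_imp_inj_on[OF g]] unfolding hadj_def by auto
  qed
  then show ?thesis using X by metis
qed

lemma square:
  assumes "hadj a b" "hadj a c" "hadj b d" "hadj c d" "b \<noteq> c" "a \<noteq> d"
  shows "\<exists>s t. s \<noteq> t \<and> b = flip s a \<and> c = flip t a \<and> d = flip t b"
proof -
  obtain s where s: "b = flip s a" using hadj_flip[OF assms(1)] by blast
  obtain t where t: "c = flip t a" using hadj_flip[OF assms(2)] by blast
  obtain u where u: "d = flip u b" using hadj_flip[OF assms(3)] by blast
  obtain u' where u': "d = flip u' c" using hadj_flip[OF assms(4)] by blast
  have st: "s \<noteq> t" using s t assms(5) by auto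
  have us: "u \<noteq> s" using u s assms(6) by auto
  have u't: "u' \<noteq> t" using u' t assms(6) by auto
  have eq: "(i \<in> flip u (flip s a)) = (i \<in> flip u' (flip t a))" for i using u u' s t by simp
  have "u = t"
  proof (rule ccontr)
    assume "u \<noteq> t"
    then show False using eq[of t] st u't by (simp add: flip_mem split: if_splits)
  qed
  then show ?thesis using st s t u by blast
qed

lemma flip_inj_idx: "flip s a = flip t a \<Longrightarrow> s = t"
  by (metis flip_mem)

lemma rank3_full:
  assumes V: "V \<subseteq> Pow {0..<n}" and iso: "graph_iso (fold contract fs V) (cube 3)"
  shows "\<exists>s0 s1 s2. distinct [s0,s1,s2] \<and> fullS V {s0,s1,s2}"
proof -
  define X where "X = fold contract fs V"
  define F where "F = set fs"
  have XF: "X = (\<lambda>v. v - F) ` V" unfolding X_def F_def fold_contract ..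
  obtain \<phi> where phi: "bij_betw \<phi> X (Pow {0..<3})" "\<forall>u\<in>X. \<forall>v\<in>X. hadj u v = hadj (\<phi> u) (\<phi> v)"
    using iso unfolding graph_iso_def cube_def X_def by blast
  define \<psi> where "\<psi> = inv_into X \<phi>"
  have psi: "bij_betw \<psi> (Pow {0..<3}) X" unfolding \<psi>_def by (rule bij_betw_inv_into[OF phi(1)])
  have phipsi: "\<phi> (\<psi> A) = A" if "A \<in> Pow {0..<3}" for A
    unfolding \<psi>_def using bij_betw_inv_into_right[OF phi(1) that] .
  have psiX: "\<psi> A \<in> X" if "A \<in> Pow {0..<3}" for A using psi that by (meson bij_betwE)
  have hp: "hadj (\<psi> A) (\<psi> B)" if "A \<in> Pow {0..<3}" "B \<in> Pow {0..<3}" "hadj A B" for A B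
  proof -
    have "hadj (\<phi> (\<psi> A)) (\<phi> (\<psi> B))" using phipsi[OF that(1)] phipsi[OF that(2)] that(3) by simp
    then show ?thesis using phi(2) psiX[OF that(1)] psiX[OF that(2)] by blast
  qed
  have pinj: "\<psi> A \<noteq> \<psi> B" if "A \<in> Pow {0..<3}" "B \<in> Pow {0..<3}" "A \<noteq> B" for A B
    using psi that unfolding bij_betw_def inj_on_def by blast
  have hf: "hadj A (flip t A)" for A t by (rule hadj_flip_self)
  have e1: "flip 0 {} = {0::nat}" "flip 1 {} = {1::nat}" "flip 2 {} = {2::nat}"
    "flip 1 {0} = {0,1::nat}" "flip 0 {1} = {0,1::nat}" "flip 2 {0} = {0,2::nat}" "flip 0 {2} = {0,2::nat}"
    "flip 2 {1} = {1,2::nat}" "flip 1 {2} = {1,2::nat}" "flip 2 {0,1} = {0,1,2::nat}" "flip 1 {0,2} = {0,1,2::nat}"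
    by (auto simp: flip_def)
  have h: "hadj {} {0::nat}" "hadj {} {1::nat}" "hadj {} {2::nat}"
    "hadj {0} {0,1::nat}" "hadj {1} {0,1::nat}" "hadj {0} {0,2::nat}" "hadj {2} {0,2::nat}"
    "hadj {1} {1,2::nat}" "hadj {2} {1,2::nat}" "hadj {0,1} {0,1,2::nat}" "hadj {0,2} {0,1,2::nat}"
    using hf[of "{}" 0] hf[of "{}" 1] hf[of "{}" 2] hf[of "{0}" 1] hf[of "{1}" 0] hf[of "{0}" 2] hf[of "{2}" 0]
      hf[of "{1}" 2] hf[of "{2}" 1] hf[of "{0,1}" 2] hf[of "{0,2}" 1] unfolding e1 by simp_all
  have P: "{} \<in> Pow {0..<3::nat}" "{0} \<in> Pow {0..<3::nat}" "{1} \<in> Pow {0..<3::nat}" "{2} \<in> Pow {0..<3::nat}"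
    "{0,1} \<in> Pow {0..<3::nat}" "{0,2} \<in> Pow {0..<3::nat}" "{1,2} \<in> Pow {0..<3::nat}" "{0,1,2} \<in> Pow {0..<3::nat}"
    by auto
  define x0 where "x0 = \<psi> {}"
  define x1 where "x1 = \<psi> {0}"
  define x2 where "x2 = \<psi> {1}"
  define x3 where "x3 = \<psi> {2}"
  define y01 where "y01 = \<psi> {0,1}"
  define y02 where "y02 = \<psi> {0,2}"
  define y12 where "y12 = \<psi> {1,2}"
  define z where "z = \<psi> {0,1,2}"
  have H: "hadj x0 x1" "hadj x0 x2" "hadj x0 x3" "hadj x1 y01" "hadj x2 y01" "hadj x1 y02" "hadj x3 y02"
    "hadj x2 y12" "hadj x3 y12" "hadj y01 z" "hadj y02 z"
    unfolding x0_def x1_def x2_def x3_def y01_def y02_def y12_def z_def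
    by (rule hp[OF P(1) P(2) h(1)], rule hp[OF P(1) P(3) h(2)], rule hp[OF P(1) P(4) h(3)],
        rule hp[OF P(2) P(5) h(4)], rule hp[OF P(3) P(5) h(5)], rule hp[OF P(2) P(6) h(6)],
        rule hp[OF P(4) P(6) h(7)], rule hp[OF P(3) P(7) h(8)], rule hp[OF P(4) P(7) h(9)],
        rule hp[OF P(5) P(8) h(10)], rule hp[OF P(6) P(8) h(11)])
  have D: "x1 \<noteq> x2" "x0 \<noteq> y01" "x1 \<noteq> x3" "x0 \<noteq> y02" "x2 \<noteq> x3" "x0 \<noteq> y12" "y01 \<noteq> y02" "x1 \<noteq> z"
  proof -
    have ne1: "{0,1::nat} \<noteq> {0,2}"
    proof
      assume h: "{0,1::nat} = {0,2}"
      have "(1::nat) \<in> {0,2}" by (subst h[symmetric]) simp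
      then show False by simp
    qed
    have ne2: "{0::nat} \<noteq> {0,1,2}"
    proof
      assume h: "{0::nat} = {0,1,2}"
      have "(1::nat) \<in> {0}" by (subst h) simp
      then show False by simp
    qed
    show "x1 \<noteq> x2" "x0 \<noteq> y01" "x1 \<noteq> x3" "x0 \<noteq> y02" "x2 \<noteq> x3" "x0 \<noteq> y12"
      unfolding x0_def x1_def x2_def x3_def y01_def y02_def y12_def z_def using pinj P by simp_all
    show "y01 \<noteq> y02" unfolding y01_def y02_def using pinj[OF P(5) P(6) ne1] .
    show "x1 \<noteq> z" unfolding x1_def z_def using pinj[OF P(2) P(8) ne2] .
  qed
  have XX: "x0 \<in> X" "x1 \<in> X" "x2 \<in> X" "x3 \<in> X" "y01 \<in> X" "y02 \<in> X" "y12 \<in> X" "z \<in> X"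
    unfolding x0_def x1_def x2_def x3_def y01_def y02_def y12_def z_def using psiX[OF P(1)] psiX[OF P(2)]
      psiX[OF P(3)] psiX[OF P(4)] psiX[OF P(5)] psiX[OF P(6)] psiX[OF P(7)] psiX[OF P(8)] by auto
  obtain s0 s1 where q1: "s0 \<noteq> s1" "x1 = flip s0 x0" "x2 = flip s1 x0" "y01 = flip s1 x1"
    using square[OF H(1) H(2) H(4) H(5) D(1) D(2)] by blast
  obtain r0 s2 where q2: "r0 \<noteq> s2" "x1 = flip r0 x0" "x3 = flip s2 x0" "y02 = flip s2 x1"
    using square[OF H(1) H(3) H(6) H(7) D(3) D(4)] by blast
  have "r0 = s0" using q1(2) q2(2) flip_inj_idx by metis
  obtain r1 r2 where q3: "r1 \<noteq> r2" "x2 = flip r1 x0" "x3 = flip r2 x0" "y12 = flip r2 x2"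
    using square[OF H(2) H(3) H(8) H(9) D(5) D(6)] by blast
  have "r1 = s1" using q1(3) q3(2) flip_inj_idx by metis
  have "r2 = s2" using q2(3) q3(3) flip_inj_idx by metis
  obtain m1 m2 where q4: "m1 \<noteq> m2" "y01 = flip m1 x1" "y02 = flip m2 x1" "z = flip m2 y01"
    using square[OF H(4) H(6) H(10) H(11) D(7) D(8)] by blast
  have "m2 = s2" using q2(4) q4(3) flip_inj_idx by metis
  have dist: "distinct [s0,s1,s2]" using q1(1) q2(1) q3(1) \<open>r0 = s0\<close> \<open>r1 = s1\<close> \<open>r2 = s2\<close> by auto
  have neq: "s0 \<noteq> s1" "s0 \<noteq> s2" "s1 \<noteq> s2" "s1 \<noteq> s0" "s2 \<noteq> s0" "s2 \<noteq> s1" using dist by auto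
  have ex: "\<forall>b0 b1 b2. \<exists>x\<in>X. (s0 \<in> x) = ((s0 \<in> x0) \<noteq> b0) \<and> (s1 \<in> x) = ((s1 \<in> x0) \<noteq> b1) \<and> (s2 \<in> x) = ((s2 \<in> x0) \<noteq> b2)"
  proof (intro allI)
    fix b0 b1 b2
    have vals: "x1 = flip s0 x0" "x2 = flip s1 x0" "x3 = flip s2 x0" "y01 = flip s1 (flip s0 x0)"
      "y02 = flip s2 (flip s0 x0)" "y12 = flip s2 (flip s1 x0)" "z = flip s2 (flip s1 (flip s0 x0))"
      using q1 q2 q3 q4 \<open>r0 = s0\<close> \<open>r1 = s1\<close> \<open>r2 = s2\<close> \<open>m2 = s2\<close> by simp_all
    show "\<exists>x\<in>X. (s0 \<in> x) = ((s0 \<in> x0) \<noteq> b0) \<and> (s1 \<in> x) = ((s1 \<in> x0) \<noteq> b1) \<and> (s2 \<in> x) = ((s2 \<in> x0) \<noteq> b2)"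
      using dist
      apply (cases b0; cases b1; cases b2)
             apply (rule bexI[OF _ XX(8)], simp add: vals flip_mem neq)
            apply (rule bexI[OF _ XX(5)], simp add: vals flip_mem neq)
           apply (rule bexI[OF _ XX(6)], simp add: vals flip_mem neq)
          apply (rule bexI[OF _ XX(2)], simp add: vals flip_mem neq)
         apply (rule bexI[OF _ XX(7)], simp add: vals flip_mem neq)
        apply (rule bexI[OF _ XX(3)], simp add: vals flip_mem neq)
       apply (rule bexI[OF _ XX(4)], simp add: vals flip_mem neq)
      apply (rule bexI[OF _ XX(1)], simp)
      done
  qed
  have notF: "s0 \<notin> F" "s1 \<notin> F" "s2 \<notin> F"
  proof -
    have disj: "x \<inter> F = {}" if "x \<in> X" for x using that XF by auto
    have m: "s0 \<in> x0 \<or> s0 \<in> x1" "s1 \<in> x0 \<or> s1 \<in> x2" "s2 \<in> x0 \<or> s2 \<in> x3"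
      using q1 q2 q3 \<open>r2 = s2\<close> by (auto simp: flip_mem)
    have d: "x0 \<inter> F = {}" "x1 \<inter> F = {}" "x2 \<inter> F = {}" "x3 \<inter> F = {}"
      using disj[OF XX(1)] disj[OF XX(2)] disj[OF XX(3)] disj[OF XX(4)] by auto
    show "s0 \<notin> F" using m(1) d(1) d(2) by auto
    show "s1 \<notin> F" using m(2) d(1) d(3) by auto
    show "s2 \<notin> F" using m(3) d(1) d(4) by auto
  qed
  have "fullS V {s0,s1,s2}" unfolding fullS_def
  proof
    fix s :: "nat \<Rightarrow> bool"
    obtain x where x: "x \<in> X" "(s0 \<in> x) = ((s0 \<in> x0) \<noteq> ((s0 \<in> x0) \<noteq> s s0))"
      "(s1 \<in> x) = ((s1 \<in> x0) \<noteq> ((s1 \<in> x0) \<noteq> s s1))" "(s2 \<in> x) = ((s2 \<in> x0) \<noteq> ((s2 \<in> x0) \<noteq> s s2))"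
      using ex[rule_format, of "(s0 \<in> x0) \<noteq> s s0" "(s1 \<in> x0) \<noteq> s s1" "(s2 \<in> x0) \<noteq> s s2"] by blast
    obtain v where v: "v \<in> V" "x = v - F" using x(1) XF by blast
    have "\<forall>i\<in>{s0,s1,s2}. (i \<in> v) = s i" using x v notF by auto
    then show "\<exists>v\<in>V. \<forall>i\<in>{s0,s1,s2}. (i \<in> v) = s i" using v(1) by blast
  qed
  then show ?thesis using dist by blast
qed

context pcl begin

lemma fullS_full3:
  assumes "fullS V S" "x \<in> S" "y \<in> S" "z \<in> S" "distinct [x,y,z]"
  shows "full3 V x y z"
  unfolding full3_def
proof (intro allI)
  fix p1 p2 p3
  obtain v where v: "v \<in> V" "\<forall>i\<in>S. (i \<in> v) = (if i = x then p1 else if i = y then p2 else p3)"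
    using assms(1)[unfolded fullS_def, rule_format, of "\<lambda>i. if i = x then p1 else if i = y then p2 else p3"] by blast
  have "(x \<in> v) = p1" "(y \<in> v) = p2" "(z \<in> v) = p3" using v(2) assms(2-5) by auto
  then show "\<exists>v\<in>V. (x \<in> v) = p1 \<and> (y \<in> v) = p2 \<and> (z \<in> v) = p3" using v(1) by blast
qed

lemma tri_exists:
  assumes e: "e < n" and ne1: "\<exists>u\<in>V. e \<in> u" and ne2: "\<exists>u\<in>V. e \<notin> u"
    and d: "distinct [t0,t1,t2]" and fS: "fullS V {t0,t1,t2}"
  shows "\<exists>a b. tri V e a b"
proof -
  obtain v1 where v1: "v1 \<in> V" "\<forall>i\<in>{t0,t1,t2}. i \<in> v1"
    using fS[unfolded fullS_def, rule_format, of "\<lambda>_. True"] by auto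
  have tn: "t0 < n" "t1 < n" "t2 < n" using v1 subn by auto
  show ?thesis
  proof (cases "e = t0 \<or> e = t1 \<or> e = t2")
    case True
    then show ?thesis
    proof (elim disjE)
      assume "e = t0"
      then have "full3 V e t1 t2" using fullS_full3[OF fS] d by auto
      then show ?thesis using d \<open>e = t0\<close> unfolding tri_def by auto
    next
      assume "e = t1"
      then have "full3 V e t0 t2" using fullS_full3[OF fS] d by auto
      then show ?thesis using d \<open>e = t1\<close> unfolding tri_def by auto
    next
      assume "e = t2"
      then have "full3 V e t0 t1" using fullS_full3[OF fS] d by auto
      then show ?thesis using d \<open>e = t2\<close> unfolding tri_def by auto
    qed
  next
    case False
    have d4: "distinct [e,t0,t1,t2]" using d False by auto
    let ?w = "w4 V e t0 t1 t2"
    have ax: "ax4 ?w" using d4 e tn by (intro ax4_w4) auto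
    have f3: "full3 V t0 t1 t2" using fullS_full3[OF fS] d by auto
    have h2: "\<forall>b c d. \<exists>a. ?w a b c d"
    proof (intro allI)
      fix b c d
      obtain v where "v \<in> V" "(t0 \<in> v) = b" "(t1 \<in> v) = c" "(t2 \<in> v) = d"
        using f3[unfolded full3_def, rule_format, of b c d] by blast
      then show "\<exists>a. ?w a b c d" unfolding w4_iff by blast
    qed
    have h3: "\<exists>b c d. ?w True b c d"
    proof -
      obtain u where "u \<in> V" "e \<in> u" using ne1 by blast
      then show ?thesis using w4_I[of u V e t0 t1 t2] by auto
    qed
    have h4: "\<exists>b c d. ?w False b c d"
    proof -
      obtain u where "u \<in> V" "e \<notin> u" using ne2 by blast
      then show ?thesis using w4_I[of u V e t0 t1 t2] by auto
    qed
    have C: "(\<forall>a b c. \<exists>d. ?w a b c d) \<or> (\<forall>a b d. \<exists>c. ?w a b c d) \<or> (\<forall>a c d. \<exists>b. ?w a b c d)"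
      using claimC[OF ax h2 h3 h4] .
    then show ?thesis
    proof (elim disjE)
      assume H: "\<forall>a b c. \<exists>d. ?w a b c d"
      have "full3 V e t0 t1" unfolding full3_def
      proof (intro allI)
        fix p1 p2 p3 obtain d where "?w p1 p2 p3 d" using H by blast
        then show "\<exists>v\<in>V. (e \<in> v) = p1 \<and> (t0 \<in> v) = p2 \<and> (t1 \<in> v) = p3" unfolding w4_iff by blast
      qed
      then show ?thesis using d4 unfolding tri_def by auto
    next
      assume H: "\<forall>a b d. \<exists>c. ?w a b c d"
      have "full3 V e t0 t2" unfolding full3_def
      proof (intro allI)
        fix p1 p2 p3 obtain c where "?w p1 p2 c p3" using H by blast
        then show "\<exists>v\<in>V. (e \<in> v) = p1 \<and> (t0 \<in> v) = p2 \<and> (t2 \<in> v) = p3" unfolding w4_iff by blast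
      qed
      then show ?thesis using d4 unfolding tri_def by auto
    next
      assume H: "\<forall>a c d. \<exists>b. ?w a b c d"
      have "full3 V e t1 t2" unfolding full3_def
      proof (intro allI)
        fix p1 p2 p3 obtain b where "?w p1 b p2 p3" using H by blast
        then show "\<exists>v\<in>V. (e \<in> v) = p1 \<and> (t1 \<in> v) = p2 \<and> (t2 \<in> v) = p3" unfolding w4_iff by blast
      qed
      then show ?thesis using d4 unfolding tri_def by auto
    qed
  qed
qed

lemma main_loc:
  assumes "e < n" "\<exists>u\<in>V. e \<in> u" "\<exists>u\<in>V. e \<notin> u" "distinct [t0,t1,t2]" "fullS V {t0,t1,t2}"
  shows "\<exists>v\<in>V. degree V v = 3 \<and> flip e v \<in> V"
proof -
  obtain a0 b0 where "tri V e a0 b0" using tri_exists[OF assms] by blast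
  then obtain a b s1 s2 s3 where "tri V e a b" "card (side3 V e a b s1 s2 s3) = 1"
    using exists_unc[OF assms(1)] by blast
  then show ?thesis using lemmaU[OF refl] by blast
qed

end

theorem mainTheorem20:
  fixes n :: nat and V :: "nat set set" and e :: nat
  assumes "partial_cube n V"
    and "antipodal n V"
    and "pc_rank V = 3"
    and "e < n"
  shows "\<exists>v\<in>V. degree V v = 3 \<and> flip e v \<in> V"
proof -
  have iso: "isometric_sub n V" and nc: "\<forall>f<n. \<exists>u\<in>V. \<exists>v\<in>V. f \<in> u \<and> f \<notin> v"
    using assms(1) unfolding partial_cube_def by auto
  have Vne: "V \<noteq> {}" and sub: "V \<subseteq> Pow {0..<n}"
    and rg: "\<forall>u\<in>V. \<forall>v\<in>V. reachable V u v \<and> gdist V u v = hdist u v"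
    using iso unfolding isometric_sub_def by auto
  have finV: "finite V" using sub by (meson finite_Pow_iff finite_atLeastLessThan finite_subset)
  have geo: "\<exists>xs. walk V xs \<and> hd xs = u \<and> last xs = w \<and> length xs = Suc (hdist u w)"
    if "u \<in> V" "w \<in> V" for u w
  proof -
    have "reachable V u w" using rg that by blast
    then obtain xs where xs: "walk V xs" "hd xs = u" "last xs = w"
      unfolding reachable_def by blast
    define Q where "Q k = (\<exists>xs. walk V xs \<and> hd xs = u \<and> last xs = w \<and> length xs = Suc k)" for k
    have ne: "xs \<noteq> []" using xs(1) unfolding walk_def by simp
    have "Q (length xs - 1)" unfolding Q_def using xs ne by (intro exI[of _ xs]) simp
    then have "Q (LEAST k. Q k)" by (rule LeastI[of Q])
    moreover have "gdist V u w = (LEAST k. Q k)" unfolding gdist_def Q_def ..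
    moreover have "gdist V u w = hdist u w" using rg that by blast
    ultimately show ?thesis unfolding Q_def by simp
  qed
  have anti: "{0..<n} - v \<in> V" if "v \<in> V" for v using assms(2) that unfolding antipodal_def by blast
  define Pr where "Pr r = (\<exists>fs. graph_iso (fold contract fs V) (cube r))" for r
  have Pr0: "Pr 0" unfolding Pr_def using rank0[OF Vne sub] by blast
  have bnd: "r \<le> card V" if "Pr r" for r using that rank_bound[OF finV] unfolding Pr_def by blast
  have rk: "pc_rank V = Greatest Pr" unfolding pc_rank_def Pr_def ..
  have Pr3: "Pr 3" using GreatestI_ex_nat[of Pr, OF _ bnd] Pr0 assms(3) rk by auto
  have nf4: "\<not> fullS V S" if "card S = 4" for S
  proof
    assume "fullS V S"
    then have "Pr 4" unfolding Pr_def using full4_rank[OF sub that] by blast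
    then have "4 \<le> Greatest Pr" using Greatest_le_nat[of Pr 4 "card V"] bnd by blast
    then show False using assms(3) rk by simp
  qed
  interpret pcl n V by (rule pcl.intro[OF sub geo anti nf4])
  obtain t0 t1 t2 where t: "distinct [t0,t1,t2]" "fullS V {t0,t1,t2}"
    using Pr3 rank3_full[OF sub] unfolding Pr_def by blast
  have ne: "\<exists>u\<in>V. e \<in> u" "\<exists>u\<in>V. e \<notin> u" using nc assms(4) by blast+
  show ?thesis using main_loc[OF assms(4) ne t] .
qed

end
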